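(* Let $L$ be a multisorted algebra in the quantifier-free signature. Then $L$ satisfies axioms (0)–(6) if and only if $L$ is isomorphic to a subalgebra of the quantifier-free algebra $A(W)$ of some set $W$.
   Context: Throughout, the Boolean prime ideal theorem is assumed. Signature. There is a sort $n$ for each natural number $n\ge 0$. For every function $\alpha\colon\{1,\dots,n\}\to\{1,\dots,k\}$ there is a unary function symbol ("substitution") $\alpha\colon n\to k$ (argument of sort $n$, value of sort $k$). For each sort there are constants $0,1$, binary operations $\vee,\wedge$ and a unary operation $\neg$. This is the quantifier-free signature. For substitutions $\alpha\colon k\to n$, $\beta\colon n\to m$, $\beta\circ\alpha\colon k\to m$ is the substitution symbol of the composite function, while $\beta(\alpha(r))$ is composition inside an algebra; $\mathrm{id}\colon n\to n$ is the identity substitution. Concrete algebras. For a set $W$ and substitution $\alpha\colon\{1,\dots,n\}\to\{1,\dots,k\}$: $\alpha^{\mathrm{tuple}}(x_1,\dots,x_k)=(x_{\alpha(1)},\dots,x_{\alpha(n)})$ and $\alpha^{\mathrm{relation}}(r)=\{\bar x\in W^k:\alpha^{\mathrm{tuple}}(\bar x)\in r\}$ for $r\subseteq W^n$. The quantifier-free algebra $A(W)$ interprets sort $n$ as $\mathcal P(W^n)$, $\alpha$ as $\alpha^{\mathrm{relation}}$, and $0,1,\vee,\wedge,\neg$ as $\emptyset,W^n,\cup,\cap$, complement in $W^n$. Partitioning cylindrifications: given $k_1,\dots,k_m$ and $n=\sum k_j$, the substitutions $c_i\colon k_i\to n$, $c_i(l)=l+\sum_{j<i}k_j$. In an algebra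 $x\le y$ (also $y\ge x$) means $x=x\wedge y$. Axioms: (0) For all partitioning cylindrifications $c_1,\dots,c_m$ and all $r_i,s_i$ of sort $k_i$: if $\bigvee_i c_i(s_i)\ge\bigwedge_i c_i(r_i)$ then $s_i\ge r_i$ for some $i$ (including $m=0$: $0\ge1$ fails in sort $0$). (1) Each sort is a bounded distributive lattice under $0,1,\vee,\wedge$. (2) Every substitution preserves $0,1,\vee,\wedge$. (3) $(\beta\circ\alpha)(r)=\beta(\alpha(r))$. (4) $\mathrm{id}(r)=r$. (5) $\alpha(\neg r)=\neg\alpha(r)$ for every substitution $\alpha$. (6) $r\vee\neg r=1$ and $r\wedge\neg r=0$ in every sort. *)

theory Defs
  imports Main
begin

text \<open>Sorts are natural
numbers; all sorts live in one HOL type 'a with carrier car n for sort n.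
The substitution symbol alpha : n -> k (alpha a function {1..n} -> {1..k})
is interpreted by sb n k alpha.  Substitutions are represented extensionally:
functions nat => nat with values in {1..k} on {1..n} and value 0 elsewhere.\<close>

record 'a qf_alg =
  car :: "nat \<Rightarrow> 'a set"
  sb  :: "nat \<Rightarrow> nat \<Rightarrow> (nat \<Rightarrow> nat) \<Rightarrow> 'a \<Rightarrow> 'a"
  zer :: "nat \<Rightarrow> 'a"
  one :: "nat \<Rightarrow> 'a"
  jn  :: "nat \<Rightarrow> 'a \<Rightarrow> 'a \<Rightarrow> 'a"
  mt  :: "nat \<Rightarrow> 'a \<Rightarrow> 'a \<Rightarrow> 'a"
  ng  :: "nat \<Rightarrow> 'a \<Rightarrow> 'a"

definition is_subst :: "nat \<Rightarrow> nat \<Rightarrow> (nat \<Rightarrow> nat) \<Rightarrow> bool" where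
  "is_subst n k \<alpha> \<longleftrightarrow> (\<forall>i\<in>{1..n}. \<alpha> i \<in> {1..k}) \<and> (\<forall>i. i \<notin> {1..n} \<longrightarrow> \<alpha> i = 0)"

definition id_subst :: "nat \<Rightarrow> nat \<Rightarrow> nat" where
  "id_subst n = (\<lambda>i. if i \<in> {1..n} then i else 0)"

text \<open>Partitioning cylindrification c_i : k_i -> sum k_j (0-based index i),
  c_i(l) = l + sum_{j<i} k_j.\<close>
definition cyl :: "nat list \<Rightarrow> nat \<Rightarrow> nat \<Rightarrow> nat" where
  "cyl ks i = (\<lambda>l. if l \<in> {1..ks ! i} then l + sum_list (take i ks) else 0)"

definition qf_multisorted_algebra :: "('a, 'b) qf_alg_scheme \<Rightarrow> bool" where
  "qf_multisorted_algebra L \<longleftrightarrow>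
     (\<forall>n. zer L n \<in> car L n \<and> one L n \<in> car L n) \<and>
     (\<forall>n. \<forall>x\<in>car L n. \<forall>y\<in>car L n.
         jn L n x y \<in> car L n \<and> mt L n x y \<in> car L n) \<and>
     (\<forall>n. \<forall>x\<in>car L n. ng L n x \<in> car L n) \<and>
     (\<forall>n k \<alpha>. is_subst n k \<alpha> \<longrightarrow> (\<forall>x\<in>car L n. sb L n k \<alpha> x \<in> car L k))"

definition le_in :: "('a, 'b) qf_alg_scheme \<Rightarrow> nat \<Rightarrow> 'a \<Rightarrow> 'a \<Rightarrow> bool" where
  "le_in L n x y \<longleftrightarrow> x = mt L n x y"

definition big_jn :: "('a, 'b) qf_alg_scheme \<Rightarrow> nat \<Rightarrow> 'a list \<Rightarrow> 'a" where
  "big_jn L n xs = foldr (jn L n) xs (zer L n)"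

definition big_mt :: "('a, 'b) qf_alg_scheme \<Rightarrow> nat \<Rightarrow> 'a list \<Rightarrow> 'a" where
  "big_mt L n xs = foldr (mt L n) xs (one L n)"

definition ax0 :: "('a, 'b) qf_alg_scheme \<Rightarrow> bool" where
  "ax0 L \<longleftrightarrow> (\<forall>ks rs ss. length rs = length ks \<longrightarrow> length ss = length ks \<longrightarrow>
      (\<forall>i<length ks. rs ! i \<in> car L (ks ! i) \<and> ss ! i \<in> car L (ks ! i)) \<longrightarrow>
      le_in L (sum_list ks)
        (big_mt L (sum_list ks) (map (\<lambda>i. sb L (ks ! i) (sum_list ks) (cyl ks i) (rs ! i)) [0..<length ks]))
        (big_jn L (sum_list ks) (map (\<lambda>i. sb L (ks ! i) (sum_list ks) (cyl ks i) (ss ! i)) [0..<length ks]))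
      \<longrightarrow> (\<exists>i<length ks. le_in L (ks ! i) (rs ! i) (ss ! i)))"

definition ax1 :: "('a, 'b) qf_alg_scheme \<Rightarrow> bool" where
  "ax1 L \<longleftrightarrow> (\<forall>n. \<forall>x\<in>car L n. \<forall>y\<in>car L n. \<forall>z\<in>car L n.
      jn L n (jn L n x y) z = jn L n x (jn L n y z) \<and>
      mt L n (mt L n x y) z = mt L n x (mt L n y z) \<and>
      jn L n x y = jn L n y x \<and> mt L n x y = mt L n y x \<and>
      jn L n x (mt L n x y) = x \<and> mt L n x (jn L n x y) = x \<and>
      jn L n x (zer L n) = x \<and> mt L n x (one L n) = x \<and>
      mt L n x (jn L n y z) = jn L n (mt L n x y) (mt L n x z))"

definition ax2 :: "('a, 'b) qf_alg_scheme \<Rightarrow> bool" where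
  "ax2 L \<longleftrightarrow> (\<forall>n k \<alpha>. is_subst n k \<alpha> \<longrightarrow>
      sb L n k \<alpha> (zer L n) = zer L k \<and> sb L n k \<alpha> (one L n) = one L k \<and>
      (\<forall>x\<in>car L n. \<forall>y\<in>car L n.
         sb L n k \<alpha> (jn L n x y) = jn L k (sb L n k \<alpha> x) (sb L n k \<alpha> y) \<and>
         sb L n k \<alpha> (mt L n x y) = mt L k (sb L n k \<alpha> x) (sb L n k \<alpha> y)))"

text \<open>For extensional substitutions alpha : k -> n, beta : n -> m the plain
  composition beta o alpha is the extensional representation of the composite.\<close>
definition ax3 :: "('a, 'b) qf_alg_scheme \<Rightarrow> bool" where
  "ax3 L \<longleftrightarrow> (\<forall>k n m \<alpha> \<beta>. is_subst k n \<alpha> \<longrightarrow> is_subst n m \<beta> \<longrightarrow>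
      (\<forall>r\<in>car L k. sb L k m (\<beta> \<circ> \<alpha>) r = sb L n m \<beta> (sb L k n \<alpha> r)))"

definition ax4 :: "('a, 'b) qf_alg_scheme \<Rightarrow> bool" where
  "ax4 L \<longleftrightarrow> (\<forall>n. \<forall>r\<in>car L n. sb L n n (id_subst n) r = r)"

definition ax5 :: "('a, 'b) qf_alg_scheme \<Rightarrow> bool" where
  "ax5 L \<longleftrightarrow> (\<forall>n k \<alpha>. is_subst n k \<alpha> \<longrightarrow>
      (\<forall>r\<in>car L n. sb L n k \<alpha> (ng L n r) = ng L k (sb L n k \<alpha> r)))"

definition ax6 :: "('a, 'b) qf_alg_scheme \<Rightarrow> bool" where
  "ax6 L \<longleftrightarrow> (\<forall>n. \<forall>r\<in>car L n. jn L n r (ng L n r) = one L n \<and> mt L n r (ng L n r) = zer L n)"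

definition qf_axioms :: "('a, 'b) qf_alg_scheme \<Rightarrow> bool" where
  "qf_axioms L \<longleftrightarrow> ax0 L \<and> ax1 L \<and> ax2 L \<and> ax3 L \<and> ax4 L \<and> ax5 L \<and> ax6 L"

text \<open>The quantifier-free algebra A(W): sort n is the power set of W^n, with
  n-tuples represented as lists of length n (entry i of the paper is xs ! (i-1)).\<close>
definition tuples :: "'w set \<Rightarrow> nat \<Rightarrow> 'w list set" where
  "tuples W n = {xs. length xs = n \<and> set xs \<subseteq> W}"

definition subst_tuple :: "nat \<Rightarrow> (nat \<Rightarrow> nat) \<Rightarrow> 'w list \<Rightarrow> 'w list" where
  "subst_tuple n \<alpha> xs = map (\<lambda>i. xs ! (\<alpha> i - 1)) [1..<n+1]"

definition subst_rel :: "'w set \<Rightarrow> nat \<Rightarrow> nat \<Rightarrow> (nat \<Rightarrow> nat) \<Rightarrow> 'w list set \<Rightarrow> 'w list set" where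
  "subst_rel W n k \<alpha> r = {xs \<in> tuples W k. subst_tuple n \<alpha> xs \<in> r}"

definition qf_algebra_of :: "'w set \<Rightarrow> 'w list set qf_alg" where
  "qf_algebra_of W = \<lparr> car = (\<lambda>n. Pow (tuples W n)), sb = subst_rel W,
     zer = (\<lambda>n. {}), one = tuples W, jn = (\<lambda>n. (\<union>)), mt = (\<lambda>n. (\<inter>)),
     ng = (\<lambda>n r. tuples W n - r) \<rparr>"

text \<open>Injective homomorphism (sortwise) from L into A(W); its image is a
  subalgebra of A(W) isomorphic to L.\<close>
definition qf_embedding :: "('a, 'b) qf_alg_scheme \<Rightarrow> 'w set \<Rightarrow> (nat \<Rightarrow> 'a \<Rightarrow> 'w list set) \<Rightarrow> bool" where
  "qf_embedding L W h \<longleftrightarrow> (let A = qf_algebra_of W in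
     (\<forall>n. inj_on (h n) (car L n) \<and> h n ` car L n \<subseteq> car A n) \<and>
     (\<forall>n. h n (zer L n) = zer A n \<and> h n (one L n) = one A n) \<and>
     (\<forall>n. \<forall>x\<in>car L n. \<forall>y\<in>car L n.
        h n (jn L n x y) = jn A n (h n x) (h n y) \<and> h n (mt L n x y) = mt A n (h n x) (h n y)) \<and>
     (\<forall>n. \<forall>x\<in>car L n. h n (ng L n x) = ng A n (h n x)) \<and>
     (\<forall>n k \<alpha>. is_subst n k \<alpha> \<longrightarrow> (\<forall>x\<in>car L n. h k (sb L n k \<alpha> x) = sb A n k \<alpha> (h n x))))"

definition embeds_in_qf :: "('a, 'b) qf_alg_scheme \<Rightarrow> 'w set \<Rightarrow> bool" where
  "embeds_in_qf L W \<longleftrightarrow> (\<exists>h. qf_embedding L W h)"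

end

theory Submission
  imports Defs
begin


locale QA =
  fixes L :: "'a qf_alg"
  assumes alg: "qf_multisorted_algebra L"
    and A0: "ax0 L" and A1: "ax1 L" and A2: "ax2 L" and A3: "ax3 L"
    and A4: "ax4 L" and A5: "ax5 L" and A6: "ax6 L"
begin

lemma zer_in[simp]: "zer L n \<in> car L n" using alg unfolding qf_multisorted_algebra_def by blast
lemma one_in[simp]: "one L n \<in> car L n" using alg unfolding qf_multisorted_algebra_def by blast
lemma jn_in[simp]: "x \<in> car L n \<Longrightarrow> y \<in> car L n \<Longrightarrow> jn L n x y \<in> car L n"
  using alg unfolding qf_multisorted_algebra_def by blast
lemma mt_in[simp]: "x \<in> car L n \<Longrightarrow> y \<in> car L n \<Longrightarrow> mt L n x y \<in> car L n"
  using alg unfolding qf_multisorted_algebra_def by blast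
lemma ng_in[simp]: "x \<in> car L n \<Longrightarrow> ng L n x \<in> car L n"
  using alg unfolding qf_multisorted_algebra_def by blast
lemma sb_in[simp]: "is_subst n k \<alpha> \<Longrightarrow> x \<in> car L n \<Longrightarrow> sb L n k \<alpha> x \<in> car L k"
  using alg unfolding qf_multisorted_algebra_def by blast

context fixes n :: nat begin
abbreviation J where "J \<equiv> jn L n"
abbreviation M where "M \<equiv> mt L n"
abbreviation Ng where "Ng \<equiv> ng L n"
abbreviation Z where "Z \<equiv> zer L n"
abbreviation One where "One \<equiv> one L n"
abbreviation C where "C \<equiv> car L n"

lemma jn_assoc: "x \<in> C \<Longrightarrow> y \<in> C \<Longrightarrow> z \<in> C \<Longrightarrow> J (J x y) z = J x (J y z)"
  using A1 unfolding ax1_def by blast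
lemma mt_assoc: "x \<in> C \<Longrightarrow> y \<in> C \<Longrightarrow> z \<in> C \<Longrightarrow> M (M x y) z = M x (M y z)"
  using A1 unfolding ax1_def by blast
lemma jn_comm: "x \<in> C \<Longrightarrow> y \<in> C \<Longrightarrow> J x y = J y x"
  using A1 unfolding ax1_def by blast
lemma mt_comm: "x \<in> C \<Longrightarrow> y \<in> C \<Longrightarrow> M x y = M y x"
  using A1 unfolding ax1_def by blast
lemma jn_abs: "x \<in> C \<Longrightarrow> y \<in> C \<Longrightarrow> J x (M x y) = x"
  using A1 unfolding ax1_def by blast
lemma mt_abs: "x \<in> C \<Longrightarrow> y \<in> C \<Longrightarrow> M x (J x y) = x"
  using A1 unfolding ax1_def by blast
lemma jn_zer: "x \<in> C \<Longrightarrow> J x Z = x"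
  using A1 unfolding ax1_def by (meson one_in)
lemma mt_one: "x \<in> C \<Longrightarrow> M x One = x"
  using A1 unfolding ax1_def by (meson one_in)
lemma distr: "x \<in> C \<Longrightarrow> y \<in> C \<Longrightarrow> z \<in> C \<Longrightarrow> M x (J y z) = J (M x y) (M x z)"
  using A1 unfolding ax1_def by blast
lemma compl1: "x \<in> C \<Longrightarrow> J x (Ng x) = One" using A6 unfolding ax6_def by blast
lemma compl2: "x \<in> C \<Longrightarrow> M x (Ng x) = Z" using A6 unfolding ax6_def by blast

lemma mt_idem: "x \<in> C \<Longrightarrow> M x x = x"
proof -
  assume x: "x \<in> C"
  have h1: "M x (J x (M x x)) = x" using x by (simp add: mt_abs)
  have h2: "J x (M x x) = x" using x by (simp add: jn_abs)
  show ?thesis using h1 by (simp only: h2)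
qed
lemma zer_mt: "x \<in> C \<Longrightarrow> M Z x = Z"
proof -
  assume x: "x \<in> C"
  have h1: "M Z (J Z x) = Z" using x by (simp add: mt_abs)
  have h2: "J Z x = x" using x jn_comm[of Z x] jn_zer[of x] by simp
  show ?thesis using h1 by (simp only: h2)
qed
lemma mt_zer: "x \<in> C \<Longrightarrow> M x Z = Z"
  using mt_comm[of x Z] zer_mt[of x] by simp
lemma one_mt: "x \<in> C \<Longrightarrow> M One x = x"
  using mt_comm[of x One] mt_one[of x] by simp
lemma jn_zer': "x \<in> C \<Longrightarrow> J Z x = x"
  using jn_comm[of x Z] jn_zer[of x] by simp
lemma distr2: "x \<in> C \<Longrightarrow> y \<in> C \<Longrightarrow> z \<in> C \<Longrightarrow> M (J y z) x = J (M y x) (M z x)"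
  using distr[of x y z] mt_comm[of x "J y z"] mt_comm[of x y] mt_comm[of x z] by simp
lemma ng_one: "Ng One = Z"
  using compl2[of One] one_mt[of "Ng One"] by simp
lemma ng_zer: "Ng Z = One"
  using compl1[of Z] jn_zer'[of "Ng Z"] by simp

lemma contr: "x \<in> C \<Longrightarrow> r \<in> C \<Longrightarrow> M r x = Z \<Longrightarrow> M (Ng r) x = Z \<Longrightarrow> x = Z"
proof -
  assume a: "x \<in> C" "r \<in> C" "M r x = Z" "M (Ng r) x = Z"
  have "x = M (J r (Ng r)) x" using a by (simp add: compl1 one_mt)
  also have "\<dots> = J (M r x) (M (Ng r) x)" using a by (simp add: distr2)
  finally show ?thesis using a by (simp add: jn_zer)
qed

lemma B1: "r \<in> C \<Longrightarrow> s \<in> C \<Longrightarrow> M (M r s) (Ng r) = Z"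
proof -
  assume a: "r \<in> C" "s \<in> C"
  have "M (M r s) (Ng r) = M (M s r) (Ng r)" using a mt_comm[of r s] by simp
  also have "\<dots> = M s (M r (Ng r))" using a by (simp add: mt_assoc)
  finally show ?thesis using a by (simp add: compl2 mt_zer)
qed
lemma B2: "r \<in> C \<Longrightarrow> s \<in> C \<Longrightarrow> M r (M s (Ng (M r s))) = Z"
  using mt_assoc[of r s "Ng (M r s)"] compl2[of "M r s"] by simp
lemma B3: "r \<in> C \<Longrightarrow> s \<in> C \<Longrightarrow> M r (Ng (J r s)) = Z"
proof -
  assume a: "r \<in> C" "s \<in> C"
  have "M r (Ng (J r s)) = M (M r (J r s)) (Ng (J r s))" using a mt_abs by simp
  also have "\<dots> = M r (M (J r s) (Ng (J r s)))" using a by (simp add: mt_assoc)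
  also have "\<dots> = Z" using a by (simp add: compl2 mt_zer)
  finally show ?thesis .
qed
lemma B4: "r \<in> C \<Longrightarrow> s \<in> C \<Longrightarrow> M (J r s) (M (Ng r) (Ng s)) = Z"
proof -
  assume a: "r \<in> C" "s \<in> C"
  have "M (J r s) (M (Ng r) (Ng s)) = J (M r (M (Ng r) (Ng s))) (M s (M (Ng r) (Ng s)))"
    using a by (simp add: distr2)
  also have "M r (M (Ng r) (Ng s)) = Z" using a
    mt_assoc[of r "Ng r" "Ng s", symmetric] compl2[of r] zer_mt[of "Ng s"] by simp
  also have "M s (M (Ng r) (Ng s)) = Z" using a
    mt_comm[of "Ng r" "Ng s"] mt_assoc[of s "Ng s" "Ng r", symmetric] compl2[of s] zer_mt[of "Ng r"] by simp
  finally show ?thesis by (simp add: jn_zer)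
qed

lemma neq_nz: "r \<in> C \<Longrightarrow> s \<in> C \<Longrightarrow> r \<noteq> s \<Longrightarrow> M r (Ng s) \<noteq> Z \<or> M s (Ng r) \<noteq> Z"
proof (rule ccontr)
  assume a: "r \<in> C" "s \<in> C" "r \<noteq> s" and b: "\<not> (M r (Ng s) \<noteq> Z \<or> M s (Ng r) \<noteq> Z)"
  have "r = M r (J s (Ng s))" using a by (simp add: compl1 mt_one)
  also have "\<dots> = M r s" using a b by (simp add: distr jn_zer)
  finally have 1: "r = M r s" .
  have "s = M s (J r (Ng r))" using a by (simp add: compl1 mt_one)
  also have "\<dots> = M s r" using a b by (simp add: distr jn_zer)
  finally have "s = M s r" .
  with 1 a show False using mt_comm[of r s] by simp
qed

lemma le_zer: "x \<in> C \<Longrightarrow> le_in L n x Z \<longleftrightarrow> x = Z"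
  unfolding le_in_def using mt_zer[of x] by simp

end

lemma big_mt_in[simp]: "set xs \<subseteq> car L n \<Longrightarrow> big_mt L n xs \<in> car L n"
  by (induction xs) (auto simp: big_mt_def)
lemma big_jn_in[simp]: "set xs \<subseteq> car L n \<Longrightarrow> big_jn L n xs \<in> car L n"
  by (induction xs) (auto simp: big_jn_def)

lemma big_mt_mem: "set xs \<subseteq> car L n \<Longrightarrow> y \<in> set xs \<Longrightarrow> mt L n (big_mt L n xs) y = big_mt L n xs"
proof (induction xs)
  case Nil then show ?case by simp
next
  case (Cons a xs)
  have bx: "big_mt L n xs \<in> car L n" using Cons by simp
  show ?case
  proof (cases "y = a")
    case True
    then show ?thesis using Cons bx
      using mt_assoc[of a n "big_mt L n xs" a] mt_comm[of "big_mt L n xs" n a] mt_assoc[of a n a "big_mt L n xs", symmetric] mt_idem[of a n]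
      by (simp add: big_mt_def)
  next
    case False
    then have "y \<in> set xs" using Cons by simp
    then have yc: "y \<in> car L n" using Cons by auto
    have "mt L n (big_mt L n (a # xs)) y = mt L n a (mt L n (big_mt L n xs) y)"
      using Cons bx yc mt_assoc[of a n "big_mt L n xs" y] by (simp add: big_mt_def)
    also have "\<dots> = big_mt L n (a # xs)" using Cons \<open>y \<in> set xs\<close> by (simp add: big_mt_def)
    finally show ?thesis .
  qed
qed

lemma big_mt_le: "set xs \<subseteq> car L n \<Longrightarrow> set ys \<subseteq> set xs \<Longrightarrow>
   mt L n (big_mt L n xs) (big_mt L n ys) = big_mt L n xs"
proof (induction ys)
  case Nil then show ?case using big_mt_in[of xs n] mt_one[of "big_mt L n xs" n] by (simp add: big_mt_def)
next
  case (Cons y ys)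
  have bx: "big_mt L n xs \<in> car L n" using Cons by simp
  have yc: "y \<in> car L n" "set ys \<subseteq> car L n" using Cons by auto
  have "mt L n (big_mt L n xs) (big_mt L n (y # ys)) =
        mt L n (mt L n (big_mt L n xs) y) (big_mt L n ys)"
    using bx yc mt_assoc[of "big_mt L n xs" n y "big_mt L n ys"] big_mt_in[of ys n] by (simp add: big_mt_def)
  also have "\<dots> = big_mt L n xs" using Cons big_mt_mem bx by simp
  finally show ?case .
qed

lemma big_mt_zero: "set xs \<subseteq> car L n \<Longrightarrow> set ys \<subseteq> set xs \<Longrightarrow>
   big_mt L n ys = zer L n \<Longrightarrow> big_mt L n xs = zer L n"
  using big_mt_le[of xs n ys] mt_zer[of "big_mt L n xs" n] big_mt_in[of xs n] by simp

lemma big_jn_zers: "(\<forall>x\<in>set xs. x = zer L n) \<Longrightarrow> big_jn L n xs = zer L n"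
  by (induction xs) (auto simp: big_jn_def jn_zer)

lemma sb_zer: "is_subst n k \<alpha> \<Longrightarrow> sb L n k \<alpha> (zer L n) = zer L k" using A2 unfolding ax2_def by blast
lemma sb_one: "is_subst n k \<alpha> \<Longrightarrow> sb L n k \<alpha> (one L n) = one L k" using A2 unfolding ax2_def by blast
lemma sb_jn: "is_subst n k \<alpha> \<Longrightarrow> x \<in> car L n \<Longrightarrow> y \<in> car L n \<Longrightarrow>
   sb L n k \<alpha> (jn L n x y) = jn L k (sb L n k \<alpha> x) (sb L n k \<alpha> y)" using A2 unfolding ax2_def by blast
lemma sb_mt: "is_subst n k \<alpha> \<Longrightarrow> x \<in> car L n \<Longrightarrow> y \<in> car L n \<Longrightarrow>
   sb L n k \<alpha> (mt L n x y) = mt L k (sb L n k \<alpha> x) (sb L n k \<alpha> y)" using A2 unfolding ax2_def by blast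
lemma sb_ng: "is_subst n k \<alpha> \<Longrightarrow> x \<in> car L n \<Longrightarrow> sb L n k \<alpha> (ng L n x) = ng L k (sb L n k \<alpha> x)"
  using A5 unfolding ax5_def by blast
lemma sb_comp: "is_subst k n \<alpha> \<Longrightarrow> is_subst n m \<beta> \<Longrightarrow> r \<in> car L k \<Longrightarrow>
   sb L k m (\<beta> \<circ> \<alpha>) r = sb L n m \<beta> (sb L k n \<alpha> r)" using A3 unfolding ax3_def by blast
lemma sb_id: "r \<in> car L n \<Longrightarrow> sb L n n (id_subst n) r = r" using A4 unfolding ax4_def by blast

lemma sb_big_mt: "is_subst n k \<alpha> \<Longrightarrow> set xs \<subseteq> car L n \<Longrightarrow>
   sb L n k \<alpha> (big_mt L n xs) = big_mt L k (map (sb L n k \<alpha>) xs)"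
proof (induction xs)
  case (Cons a xs)
  then show ?case using big_mt_in[of xs n] sb_mt[of n k \<alpha> a "big_mt L n xs"] by (simp add: big_mt_def)
qed (simp add: big_mt_def sb_one)

end


fun pos :: "'w list \<Rightarrow> 'w \<Rightarrow> nat" where
  "pos [] x = 0"
| "pos (y # ys) x = (if x = y then 0 else Suc (pos ys x))"

definition emb :: "'w list \<Rightarrow> 'w list \<Rightarrow> nat \<Rightarrow> nat" where
  "emb xs us = (\<lambda>i. if 1 \<le> i \<and> i \<le> length xs then
      (if xs ! (i - 1) \<in> set us then pos us (xs ! (i - 1)) + 1 else 1) else 0)"

lemma emb_in: "1 \<le> i \<Longrightarrow> i \<le> length xs \<Longrightarrow> xs ! (i - 1) \<in> set us \<Longrightarrow>
   emb xs us i = pos us (xs ! (i - 1)) + 1"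
  by (simp add: emb_def)
lemma emb_out: "\<not> (1 \<le> i \<and> i \<le> length xs) \<Longrightarrow> emb xs us i = 0"
  by (simp add: emb_def)
lemma emb_nm: "1 \<le> i \<Longrightarrow> i \<le> length xs \<Longrightarrow> xs ! (i - 1) \<notin> set us \<Longrightarrow> emb xs us i = 1"
  by (simp add: emb_def)

lemma pos_lt: "x \<in> set us \<Longrightarrow> pos us x < length us"
  by (induction us) auto
lemma nth_pos: "x \<in> set us \<Longrightarrow> us ! pos us x = x"
  by (induction us) auto
lemma pos_nth: "distinct us \<Longrightarrow> i < length us \<Longrightarrow> pos us (us ! i) = i"
proof (induction us arbitrary: i)
  case (Cons a us)
  then show ?case by (cases i) (auto simp: nth_mem)
qed simp

lemma is_subst_emb: "set xs \<subseteq> set us \<or> us \<noteq> [] \<Longrightarrow> is_subst (length xs) (length us) (emb xs us)"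
proof -
  assume a: "set xs \<subseteq> set us \<or> us \<noteq> []"
  have "emb xs us i \<in> {1..length us}" if i: "i \<in> {1..length xs}" for i
  proof (cases "xs ! (i - 1) \<in> set us")
    case True
    then show ?thesis using i pos_lt[OF True] by (simp add: emb_def)
  next
    case False
    have "xs ! (i - 1) \<in> set xs" using i by (intro nth_mem) auto
    then have "us \<noteq> []" using a False by auto
    then show ?thesis using i False by (simp add: emb_def Suc_le_eq)
  qed
  moreover have "emb xs us i = 0" if "i \<notin> {1..length xs}" for i using that by (simp add: emb_def)
  ultimately show ?thesis unfolding is_subst_def by blast
qed

lemma emb_comp: "set xs \<subseteq> set vs \<Longrightarrow> set vs \<subseteq> set us \<Longrightarrow> emb vs us \<circ> emb xs vs = emb xs us"
proof (rule ext)
  fix i assume a: "set xs \<subseteq> set vs" "set vs \<subseteq> set us"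
  show "(emb vs us \<circ> emb xs vs) i = emb xs us i"
  proof (cases "1 \<le> i \<and> i \<le> length xs")
    case True
    then have x1: "xs ! (i - 1) \<in> set vs" using a by (intro subsetD[OF a(1)] nth_mem) auto
    then have x: "xs ! (i - 1) \<in> set vs" "xs ! (i - 1) \<in> set us" using a by auto
    have e1: "emb xs vs i = pos vs (xs!(i-1)) + 1" using True x by (intro emb_in) auto
    have e2: "emb vs us (pos vs (xs!(i-1)) + 1) = pos us (xs!(i-1)) + 1"
      using pos_lt[OF x(1)] nth_pos[OF x(1)] x(2) by (subst emb_in) auto
    have e3: "emb xs us i = pos us (xs!(i-1)) + 1" using True x by (intro emb_in) auto
    show ?thesis using e1 e2 e3 by simp
  next
    case False then show ?thesis by (simp add: emb_out)
  qed
qed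

lemma emb_self: "distinct vs \<Longrightarrow> emb vs vs = id_subst (length vs)"
  by (rule ext) (auto simp: emb_def id_subst_def pos_nth)

lemma emb_retr: "distinct C \<Longrightarrow> set C \<subseteq> set us \<Longrightarrow> emb us C \<circ> emb C us = id_subst (length C)"
proof (rule ext)
  fix i assume a: "distinct C" "set C \<subseteq> set us"
  show "(emb us C \<circ> emb C us) i = id_subst (length C) i"
  proof (cases "1 \<le> i \<and> i \<le> length C")
    case True
    then have x1: "C ! (i - 1) \<in> set C" by (intro nth_mem) auto
    then have x: "C ! (i - 1) \<in> set C" "C ! (i - 1) \<in> set us" using a by auto
    have il: "i - 1 < length C" using True by linarith
    have e1: "emb C us i = pos us (C!(i-1)) + 1" using True x by (intro emb_in) auto
    have e2: "emb us C (pos us (C!(i-1)) + 1) = pos C (C!(i-1)) + 1"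
      using pos_lt[OF x(2)] nth_pos[OF x(2)] x(1) by (subst emb_in) auto
    show ?thesis using e1 e2 pos_nth[OF a(1) il] True by (simp add: id_subst_def)
  next
    case False then show ?thesis by (auto simp add: emb_out id_subst_def)
  qed
qed

lemma nth_concat_blk: "i < length bs \<Longrightarrow> j < length (bs ! i) \<Longrightarrow>
   concat bs ! (sum_list (map length (take i bs)) + j) = bs ! i ! j"
proof (induction bs arbitrary: i)
  case (Cons b bs)
  then show ?case by (cases i) (auto simp: nth_append)
qed simp

lemma sum_take_le: "i < length bs \<Longrightarrow>
   sum_list (map length (take i bs)) + length (bs ! i) \<le> length (concat bs)"
proof (induction bs arbitrary: i)
  case (Cons b bs)
  then show ?case by (cases i) auto
qed simp

lemma emb_block: "distinct (concat bs) \<Longrightarrow> i < length bs \<Longrightarrow>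
   emb (bs ! i) (concat bs) = cyl (map length bs) i"
proof (rule ext)
  fix l assume a: "distinct (concat bs)" "i < length bs"
  let ?S = "sum_list (map length (take i bs))"
  show "emb (bs ! i) (concat bs) l = cyl (map length bs) i l"
  proof (cases "1 \<le> l \<and> l \<le> length (bs ! i)")
    case True
    have lt: "?S + (l - 1) < length (concat bs)" using sum_take_le[OF a(2)] True by linarith
    have eq: "concat bs ! (?S + (l - 1)) = bs ! i ! (l - 1)"
    proof -
      have "l - 1 < length (bs ! i)" using True by linarith
      from nth_concat_blk[OF a(2) this] show ?thesis .
    qed
    have mem: "bs ! i ! (l - 1) \<in> set (concat bs)" using lt eq by (metis nth_mem)
    have "pos (concat bs) (bs ! i ! (l - 1)) = ?S + (l - 1)"
      using pos_nth[OF a(1) lt] eq by simp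
    then show ?thesis using True mem a(2) by (simp add: emb_def cyl_def take_map)
  next
    case False then show ?thesis using a(2) by (auto simp: emb_def cyl_def)
  qed
qed

lemma subst_tuple_block: "i < length bs \<Longrightarrow>
   subst_tuple (length (bs ! i)) (cyl (map length bs) i) (concat bs) = bs ! i"
proof (rule nth_equalityI)
  assume a: "i < length bs"
  show "length (subst_tuple (length (bs ! i)) (cyl (map length bs) i) (concat bs)) = length (bs ! i)"
    by (simp add: subst_tuple_def del: upt_Suc)
  fix j assume j: "j < length (subst_tuple (length (bs ! i)) (cyl (map length bs) i) (concat bs))"
  then have j': "j < length (bs ! i)" by (simp add: subst_tuple_def del: upt_Suc)
  have "cyl (map length bs) i (Suc j) - 1 = sum_list (map length (take i bs)) + j"
    using j' a by (simp add: cyl_def take_map)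
  then show "subst_tuple (length (bs ! i)) (cyl (map length bs) i) (concat bs) ! j = bs ! i ! j"
    using j' a nth_concat_blk[OF a j'] by (simp add: subst_tuple_def del: upt_Suc)
qed



type_synonym 'a var = "nat \<times> 'a \<times> 'a \<times> nat"

definition blk :: "nat \<Rightarrow> 'a \<Rightarrow> 'a \<Rightarrow> 'a var list" where
  "blk n r s = map (\<lambda>i. (n, r, s, i)) [0..<n]"

lemma blk_len[simp]: "length (blk n r s) = n" by (simp add: blk_def)
lemma blk_distinct[simp]: "distinct (blk n r s)" by (simp add: blk_def distinct_map inj_on_def)
lemma blk_set: "x \<in> set (blk n r s) \<Longrightarrow> fst x = n \<and> fst (snd x) = r \<and> fst (snd (snd x)) = s"
  by (auto simp: blk_def)

lemma distinct_concat_blk: "distinct ps \<Longrightarrow> distinct (concat (map (\<lambda>(n, r, s). blk n r s) ps))"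
proof (induction ps)
  case (Cons p ps)
  obtain n r s where p: "p = (n, r, s)" by (cases p) auto
  have "set (blk n r s) \<inter> set (concat (map (\<lambda>(n, r, s). blk n r s) ps)) = {}"
  proof (rule ccontr)
    assume "\<not> ?thesis"
    then obtain x where x: "x \<in> set (blk n r s)" "x \<in> set (concat (map (\<lambda>(n, r, s). blk n r s) ps))" by blast
    then obtain q where q: "q \<in> set ps" "x \<in> set ((\<lambda>(n, r, s). blk n r s) q)" by auto
    obtain n' r' s' where q': "q = (n', r', s')" by (cases q) auto
    from blk_set[OF x(1)] blk_set[of x n' r' s'] q q' have "q = p" using p by auto
    then show False using Cons q by auto
  qed
  then show ?case using Cons p by simp
qed simp

lemma is_subst_cyl: "i < length ks \<Longrightarrow> is_subst (ks ! i) (sum_list ks) (cyl ks i)"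
proof -
  assume i: "i < length ks"
  have "sum_list ks = sum_list (take (Suc i) ks) + sum_list (drop (Suc i) ks)"
    by (metis append_take_drop_id sum_list_append)
  also have "sum_list (take (Suc i) ks) = sum_list (take i ks) + ks ! i"
    using i by (simp add: take_Suc_conv_app_nth)
  finally have "sum_list (take i ks) + ks ! i \<le> sum_list ks" by simp
  then show ?thesis unfolding is_subst_def cyl_def by auto
qed

context QA begin

lemma ax0_nz:
  assumes len: "length rs = length ks"
    and rs: "\<forall>i<length ks. rs ! i \<in> car L (ks ! i) \<and> rs ! i \<noteq> zer L (ks ! i)"
  shows "big_mt L (sum_list ks) (map (\<lambda>i. sb L (ks ! i) (sum_list ks) (cyl ks i) (rs ! i)) [0..<length ks])
         \<noteq> zer L (sum_list ks)"
proof
  let ?N = "sum_list ks"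
  let ?X = "big_mt L ?N (map (\<lambda>i. sb L (ks ! i) ?N (cyl ks i) (rs ! i)) [0..<length ks])"
  define ss where "ss = map (\<lambda>i. zer L (ks ! i)) [0..<length ks]"
  assume X: "?X = zer L ?N"
  have "big_jn L ?N (map (\<lambda>i. sb L (ks ! i) ?N (cyl ks i) (ss ! i)) [0..<length ks]) = zer L ?N"
    by (rule big_jn_zers) (auto simp: ss_def sb_zer is_subst_cyl)
  then have le: "le_in L ?N ?X (big_jn L ?N (map (\<lambda>i. sb L (ks ! i) ?N (cyl ks i) (ss ! i)) [0..<length ks]))"
    using X le_zer[of "zer L ?N" ?N] by simp
  have "length ss = length ks" "\<forall>i<length ks. rs ! i \<in> car L (ks ! i) \<and> ss ! i \<in> car L (ks ! i)"
    using rs by (auto simp: ss_def)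
  with A0 len le obtain i where i: "i < length ks" "le_in L (ks ! i) (rs ! i) (ss ! i)"
    unfolding ax0_def by blast
  then show False using rs le_zer[of "rs ! i" "ks ! i"] by (simp add: ss_def)
qed

lemma one0_ne_zer0: "one L 0 \<noteq> zer L 0"
  using ax0_nz[of "[]" "[]"] by (simp add: big_mt_def)

lemma cyl00: "cyl [0, 0] 0 = id_subst 0" "cyl [0, 0] (Suc 0) = id_subst 0"
  by (rule ext, simp add: cyl_def id_subst_def)+

lemma L0_cases: "x \<in> car L 0 \<Longrightarrow> x = zer L 0 \<or> x = one L 0"
proof (rule ccontr)
  assume x: "x \<in> car L 0" and nx: "\<not> (x = zer L 0 \<or> x = one L 0)"
  have ngx: "ng L 0 x \<noteq> zer L 0"
  proof
    assume "ng L 0 x = zer L 0"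
    then have "jn L 0 x (zer L 0) = one L 0" using compl1[OF x] by simp
    then show False using nx jn_zer[OF x] by simp
  qed
  have "big_mt L (sum_list [0,0]) (map (\<lambda>i. sb L ([0,0] ! i) (sum_list [0,0]) (cyl [0,0] i) ([x, ng L 0 x] ! i)) [0..<length [0::nat,0]])
         \<noteq> zer L (sum_list [0,0])"
    using x nx ngx by (intro ax0_nz) (auto simp: nth_Cons split: nat.splits)
  moreover have "[0..<length [0::nat,0]] = [0, 1]" by (simp add: upt_rec)
  ultimately show False using x by (simp add: cyl00 sb_id big_mt_def mt_one compl2)
qed

end

locale QAN = QA + assumes nd: "one L 1 \<noteq> zer L 1"
begin

lemma nondeg: "one L n \<noteq> zer L n"
proof (cases n)
  case 0 then show ?thesis using one0_ne_zer0 by simp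
next
  case (Suc m)
  define \<beta> where "\<beta> = (\<lambda>i::nat. if i \<in> {1..n} then 1::nat else 0)"
  have b: "is_subst n 1 \<beta>" by (simp add: is_subst_def \<beta>_def)
  show ?thesis using sb_one[OF b] sb_zer[OF b] nd by metis
qed

lemma emb_nz:
  assumes Cl: "distinct Cl" "set Cl \<subseteq> set us" and x: "x \<in> car L (length Cl)"
    and z: "sb L (length Cl) (length us) (emb Cl us) x = zer L (length us)"
  shows "x = zer L (length Cl)"
proof (cases "Cl = []")
  case True
  then have x0: "x \<in> car L 0" using x by simp
  have s: "is_subst 0 (length us) (emb Cl us)" using is_subst_emb[of Cl us] True by simp
  show ?thesis
  proof (rule ccontr)
    assume "x \<noteq> zer L (length Cl)"
    then have "x = one L 0" using L0_cases[OF x0] True by auto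
    then show False using z sb_one[OF s] nondeg[of "length us"] True by simp
  qed
next
  case False
  have s1: "is_subst (length Cl) (length us) (emb Cl us)" using is_subst_emb Cl by blast
  have s2: "is_subst (length us) (length Cl) (emb us Cl)" using is_subst_emb False by blast
  have "x = sb L (length Cl) (length Cl) (emb us Cl \<circ> emb Cl us) x"
    using emb_retr[OF Cl] sb_id[OF x] by simp
  also have "\<dots> = sb L (length us) (length Cl) (emb us Cl) (zer L (length us))"
    using sb_comp[OF s1 s2 x] z by simp
  also have "\<dots> = zer L (length Cl)" using sb_zer[OF s2] .
  finally show ?thesis .
qed

end


context QAN begin

definition Phi :: "('a var list \<times> 'a) set" where
  "Phi = {(vs, r). distinct vs \<and> r \<in> car L (length vs)}"

definition Ib :: "'a var list \<Rightarrow> ('a var list \<times> 'a) set \<Rightarrow> 'a set" where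
  "Ib us S = (\<lambda>(vs, r). sb L (length vs) (length us) (emb vs us) r) ` {(vs, r) \<in> S. set vs \<subseteq> set us}"

definition cons :: "('a var list \<times> 'a) set \<Rightarrow> bool" where
  "cons S \<longleftrightarrow> S \<subseteq> Phi \<and> (\<forall>us xs. distinct us \<longrightarrow> set xs \<subseteq> Ib us S \<longrightarrow>
      big_mt L (length us) xs \<noteq> zer L (length us))"

definition ee :: "nat \<Rightarrow> 'a \<Rightarrow> 'a \<Rightarrow> 'a" where
  "ee n r s = (if mt L n r (ng L n s) \<noteq> zer L n then mt L n r (ng L n s) else mt L n s (ng L n r))"

definition D :: "('a var list \<times> 'a) set" where
  "D = {(blk n r s, ee n r s) | n r s. r \<in> car L n \<and> s \<in> car L n \<and> r \<noteq> s}"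

lemma ee_in: "r \<in> car L n \<Longrightarrow> s \<in> car L n \<Longrightarrow> ee n r s \<in> car L n"
  by (simp add: ee_def)
lemma ee_nz: "r \<in> car L n \<Longrightarrow> s \<in> car L n \<Longrightarrow> r \<noteq> s \<Longrightarrow> ee n r s \<noteq> zer L n"
  using neq_nz[of r n s] by (auto simp: ee_def)

lemma Ib_car: "S \<subseteq> Phi \<Longrightarrow> Ib us S \<subseteq> car L (length us)"
  unfolding Ib_def Phi_def using is_subst_emb by fastforce

lemma Ib_mono: "S \<subseteq> S' \<Longrightarrow> Ib us S \<subseteq> Ib us S'"
  unfolding Ib_def by blast

lemma Ib_insert: "set vs \<subseteq> set us \<Longrightarrow>
   Ib us (insert (vs, r) S) = insert (sb L (length vs) (length us) (emb vs us) r) (Ib us S)"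
  unfolding Ib_def by auto

lemma Ib_self: "distinct vs \<Longrightarrow> (vs, r) \<in> S \<Longrightarrow> S \<subseteq> Phi \<Longrightarrow> r \<in> Ib vs S"
proof -
  assume a: "distinct vs" "(vs, r) \<in> S" "S \<subseteq> Phi"
  then have r: "r \<in> car L (length vs)" by (auto simp: Phi_def)
  have "sb L (length vs) (length vs) (emb vs vs) r = r" using emb_self[OF a(1)] sb_id[OF r] by simp
  then show ?thesis unfolding Ib_def using a(2) by force
qed

lemma sb_emb_comp: "set vs \<subseteq> set us1 \<Longrightarrow> set us1 \<subseteq> set us \<Longrightarrow> r \<in> car L (length vs) \<Longrightarrow>
   sb L (length us1) (length us) (emb us1 us) (sb L (length vs) (length us1) (emb vs us1) r)
   = sb L (length vs) (length us) (emb vs us) r"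
proof -
  assume a: "set vs \<subseteq> set us1" "set us1 \<subseteq> set us" "r \<in> car L (length vs)"
  have s1: "is_subst (length vs) (length us1) (emb vs us1)" using is_subst_emb a by blast
  have s2: "is_subst (length us1) (length us) (emb us1 us)" using is_subst_emb a by blast
  show ?thesis using sb_comp[OF s1 s2 a(3)] emb_comp[OF a(1,2)] by simp
qed

lemma transport:
  assumes S: "S \<subseteq> Phi" and sub: "set us1 \<subseteq> set us" and xs: "set xs \<subseteq> Ib us1 S"
  shows "set (map (sb L (length us1) (length us) (emb us1 us)) xs) \<subseteq> Ib us S"
proof
  fix y assume "y \<in> set (map (sb L (length us1) (length us) (emb us1 us)) xs)"
  then obtain x where x: "x \<in> set xs" "y = sb L (length us1) (length us) (emb us1 us) x" by auto
  then obtain vs r where vr: "(vs, r) \<in> S" "set vs \<subseteq> set us1"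
    "x = sb L (length vs) (length us1) (emb vs us1) r"
    using xs unfolding Ib_def by auto
  have r: "r \<in> car L (length vs)" using vr S by (auto simp: Phi_def)
  have "y = sb L (length vs) (length us) (emb vs us) r"
    using x vr sb_emb_comp[OF vr(2) sub r] by simp
  then show "y \<in> Ib us S" unfolding Ib_def using vr sub by force
qed

lemma cons_Union:
  assumes ch: "\<forall>S\<in>Ch. cons S" "Ch \<noteq> {}" "chain\<^sub>\<subseteq> Ch"
  shows "cons (\<Union>Ch)"
  unfolding cons_def
proof (intro conjI allI impI)
  show "\<Union>Ch \<subseteq> Phi" using ch unfolding cons_def by blast
  fix us :: "'a var list" and xs assume us: "distinct us" and xs: "set xs \<subseteq> Ib us (\<Union>Ch)"
  let ?g = "\<lambda>(vs, r). sb L (length vs) (length us) (emb vs us) r"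
  obtain F where F: "F \<subseteq> {(vs, r) \<in> \<Union>Ch. set vs \<subseteq> set us}" "finite F" "set xs = ?g ` F"
    using finite_subset_image[OF finite_set xs[unfolded Ib_def]] by blast
  obtain S where S: "S \<in> Ch" "F \<subseteq> S"
  proof (cases "F = {}")
    case True then show ?thesis using that ch(2) by blast
  next
    case False
    have "subset.chain UNIV Ch" using ch(3) chain_subset_alt_def by metis
    then show ?thesis using finite_subset_Union_chain[OF F(2) _ ch(2)] F(1) that by blast
  qed
  have "F \<subseteq> {(vs, r) \<in> S. set vs \<subseteq> set us}" using F S by auto
  then have "?g ` F \<subseteq> ?g ` {(vs, r) \<in> S. set vs \<subseteq> set us}" by (rule image_mono)
  then have "set xs \<subseteq> Ib us S" unfolding Ib_def using F(3) by simp
  then show "big_mt L (length us) xs \<noteq> zer L (length us)" using ch(1) S(1) us unfolding cons_def by blast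
qed

lemma D_Phi: "D \<subseteq> Phi"
  unfolding D_def Phi_def using ee_in by auto

lemma cons_D: "cons D"
  unfolding cons_def
proof (intro conjI allI impI)
  show "D \<subseteq> Phi" by (rule D_Phi)
  fix us :: "'a var list" and xs assume us: "distinct us" and xs: "set xs \<subseteq> Ib us D"
  let ?g = "\<lambda>(n, r, s). sb L n (length us) (emb (blk n r s) us) (ee n r s)"
  define Dus where "Dus = {(n, r, s). r \<in> car L n \<and> s \<in> car L n \<and> r \<noteq> s \<and> set (blk n r s) \<subseteq> set us}"
  have "Ib us D \<subseteq> ?g ` Dus"
  proof
    fix x assume "x \<in> Ib us D"
    then obtain n r s where "x = ?g (n, r, s)" "(n, r, s) \<in> Dus"
      unfolding Ib_def D_def Dus_def by auto
    then show "x \<in> ?g ` Dus" by blast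
  qed
  with xs have "set xs \<subseteq> ?g ` Dus" by (rule order_trans)
  from finite_subset_image[OF finite_set this] obtain F where F: "F \<subseteq> Dus" "finite F" "set xs = ?g ` F"
    by (elim exE conjE)
  obtain ps where ps: "set ps = F" "distinct ps" using finite_distinct_list[OF F(2)] by blast
  define bs where "bs = map (\<lambda>(n, r, s). blk n r s) ps"
  define ks where "ks = map length bs"
  define rs where "rs = map (\<lambda>(n, r, s). ee n r s) ps"
  define Cc where "Cc = concat bs"
  have lbs: "length bs = length ps" "length ks = length ps" "length rs = length ps"
    by (simp_all add: bs_def ks_def rs_def)
  have dC: "distinct Cc" unfolding Cc_def bs_def by (rule distinct_concat_blk[OF ps(2)])
  have N: "sum_list ks = length Cc" by (simp add: ks_def Cc_def length_concat)
  have psD: "ps ! i \<in> Dus" if "i < length ps" for i using that ps F by auto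
  have Cus: "set Cc \<subseteq> set us"
  proof
    fix x assume "x \<in> set Cc"
    then obtain b where "b \<in> set bs" "x \<in> set b" by (auto simp: Cc_def)
    then obtain i where i: "i < length ps" "b = (\<lambda>(n, r, s). blk n r s) (ps ! i)"
      by (auto simp: bs_def in_set_conv_nth)
    obtain n r s where p: "ps ! i = (n, r, s)" by (cases "ps ! i") auto
    have "set (blk n r s) \<subseteq> set us" using psD[OF i(1)] p by (simp add: Dus_def)
    then show "x \<in> set us" using i(2) p \<open>x \<in> set b\<close> by auto
  qed
  have comp: "ks ! i = fst (ps ! i) \<and> bs ! i = blk (fst (ps ! i)) (fst (snd (ps ! i))) (snd (snd (ps ! i)))
      \<and> rs ! i = ee (fst (ps ! i)) (fst (snd (ps ! i))) (snd (snd (ps ! i)))" if "i < length ps" for i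
    using that by (auto simp: ks_def bs_def rs_def split: prod.splits)
  have rsok: "\<forall>i<length ks. rs ! i \<in> car L (ks ! i) \<and> rs ! i \<noteq> zer L (ks ! i)"
  proof (intro allI impI)
    fix i assume "i < length ks"
    then have i: "i < length ps" using lbs by simp
    show "rs ! i \<in> car L (ks ! i) \<and> rs ! i \<noteq> zer L (ks ! i)"
    proof -
      obtain n r s where p: "ps ! i = (n, r, s)" by (cases "ps ! i") auto
      have "r \<in> car L n" "s \<in> car L n" "r \<noteq> s" using psD[OF i] p by (simp_all add: Dus_def)
      then show ?thesis using comp[OF i] p ee_in ee_nz by simp
    qed
  qed
  let ?Y = "big_mt L (sum_list ks) (map (\<lambda>i. sb L (ks ! i) (sum_list ks) (cyl ks i) (rs ! i)) [0..<length ks])"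
  have Ynz: "?Y \<noteq> zer L (sum_list ks)" using ax0_nz[OF _ rsok] lbs by simp
  have cylemb: "cyl ks i = emb (bs ! i) Cc" if "i < length ps" for i
    using emb_block[of bs i] dC that lbs by (simp add: ks_def Cc_def)
  have ksb: "ks ! i = length (bs ! i)" if "i < length ps" for i using that lbs by (simp add: ks_def)
  have rsin: "rs ! i \<in> car L (length (bs ! i))" if "i < length ps" for i
    using rsok ksb[OF that] that lbs by auto
  have bsC: "set (bs ! i) \<subseteq> set Cc" if "i < length ps" for i
  proof -
    have "bs ! i \<in> set bs" using that lbs by simp
    then show ?thesis unfolding Cc_def by auto
  qed
  define Ys where "Ys = map (\<lambda>i. sb L (ks ! i) (sum_list ks) (cyl ks i) (rs ! i)) [0..<length ks]"
  have YsC: "set Ys \<subseteq> car L (length Cc)"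
  proof
    fix y assume "y \<in> set Ys"
    then obtain i where i: "i < length ks" "y = sb L (ks ! i) (sum_list ks) (cyl ks i) (rs ! i)"
      by (auto simp: Ys_def)
    have "y \<in> car L (sum_list ks)" using i rsok is_subst_cyl[OF i(1)] by simp
    then show "y \<in> car L (length Cc)" using N by simp
  qed
  have sC: "is_subst (length Cc) (length us) (emb Cc us)" using is_subst_emb Cus by blast
  have eq2: "map (sb L (length Cc) (length us) (emb Cc us)) Ys = map ?g ps"
  proof (rule nth_equalityI)
    show "length (map (sb L (length Cc) (length us) (emb Cc us)) Ys) = length (map ?g ps)"
      using lbs by (simp add: Ys_def)
    fix j assume "j < length (map (sb L (length Cc) (length us) (emb Cc us)) Ys)"
    then have j: "j < length ps" using lbs by (simp add: Ys_def)
    obtain n r s where p: "ps ! j = (n, r, s)" by (cases "ps ! j") auto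
    have bj: "bs ! j = blk n r s" "ks ! j = n" "rs ! j = ee n r s" using comp[OF j] p by auto
    have Ysj: "Ys ! j = sb L n (length Cc) (emb (blk n r s) Cc) (ee n r s)"
      using j lbs bj cylemb[OF j] N by (simp add: Ys_def)
    have ein: "ee n r s \<in> car L (length (blk n r s))" using rsin[OF j] bj by simp
    have "sb L (length Cc) (length us) (emb Cc us) (Ys ! j) = sb L n (length us) (emb (blk n r s) us) (ee n r s)"
      using Ysj sb_emb_comp[OF bsC[OF j, unfolded bj] Cus ein] by simp
    then show "map (sb L (length Cc) (length us) (emb Cc us)) Ys ! j = map ?g ps ! j"
      using j lbs p by (simp add: Ys_def)
  qed
  have setg: "set (map ?g ps) = set xs" using ps F by simp
  have gC: "set (map ?g ps) \<subseteq> car L (length us)" using setg xs Ib_car[OF D_Phi] by blast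
  show "big_mt L (length us) xs \<noteq> zer L (length us)"
  proof
    assume z: "big_mt L (length us) xs = zer L (length us)"
    have "big_mt L (length us) (map ?g ps) = zer L (length us)"
      using big_mt_zero[OF gC _ z] setg by simp
    then have "sb L (length Cc) (length us) (emb Cc us) (big_mt L (length Cc) Ys) = zer L (length us)"
      using sb_big_mt[OF sC YsC] eq2 by simp
    then have "big_mt L (length Cc) Ys = zer L (length Cc)"
      using emb_nz[OF dC Cus] YsC by simp
    then show False using Ynz N by (simp add: Ys_def)
  qed
qed

end


context QAN begin

definition AA :: "('a var list \<times> 'a) set set" where "AA = {S. cons S \<and> D \<subseteq> S}"

lemma zorn_ex: "\<exists>M\<in>AA. \<forall>X\<in>AA. M \<subseteq> X \<longrightarrow> X = M"
proof (rule Zorn_Lemma2, intro ballI)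
  fix Ch assume ch: "Ch \<in> chains AA"
  show "\<exists>U\<in>AA. \<forall>X\<in>Ch. X \<subseteq> U"
  proof (cases "Ch = {}")
    case True
    then show ?thesis using cons_D by (auto simp: AA_def)
  next
    case False
    have "\<forall>S\<in>Ch. cons S" "chain\<^sub>\<subseteq> Ch" using ch by (auto simp: chains_def AA_def)
    then have "cons (\<Union>Ch)" using cons_Union False by blast
    moreover have "D \<subseteq> \<Union>Ch" using ch False by (auto simp: chains_def AA_def)
    ultimately show ?thesis by (auto simp: AA_def)
  qed
qed

definition Mx :: "('a var list \<times> 'a) set" where
  "Mx = (SOME M. M \<in> AA \<and> (\<forall>X\<in>AA. M \<subseteq> X \<longrightarrow> X = M))"

lemma Mx_prop: "Mx \<in> AA \<and> (\<forall>X\<in>AA. Mx \<subseteq> X \<longrightarrow> X = Mx)"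
  unfolding Mx_def using someI_ex[OF zorn_ex[unfolded Bex_def]] .

lemma Mx_cons: "cons Mx" using Mx_prop by (simp add: AA_def)
lemma D_Mx: "D \<subseteq> Mx" using Mx_prop by (simp add: AA_def)
lemma Mx_Phi: "Mx \<subseteq> Phi" using Mx_cons by (simp add: cons_def)
lemma Mx_max: "cons S \<Longrightarrow> Mx \<subseteq> S \<Longrightarrow> S = Mx"
  using Mx_prop D_Mx by (auto simp: AA_def)

lemma Mx_nz: "distinct us \<Longrightarrow> set xs \<subseteq> Ib us Mx \<Longrightarrow> big_mt L (length us) xs \<noteq> zer L (length us)"
  using Mx_cons by (simp add: cons_def)

lemma M_compl:
  assumes vr: "distinct vs" "r \<in> car L (length vs)"
  shows "(vs, r) \<in> Mx \<or> (vs, ng L (length vs) r) \<in> Mx"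
proof (rule ccontr)
  let ?n = "length vs"
  assume nn: "\<not> ((vs, r) \<in> Mx \<or> (vs, ng L ?n r) \<in> Mx)"
  have ph1: "insert (vs, r) Mx \<subseteq> Phi" using vr Mx_Phi by (auto simp: Phi_def)
  have ph2: "insert (vs, ng L ?n r) Mx \<subseteq> Phi" using vr Mx_Phi by (auto simp: Phi_def)
  have nc1: "\<not> cons (insert (vs, r) Mx)" using Mx_max[of "insert (vs, r) Mx"] nn by blast
  have nc2: "\<not> cons (insert (vs, ng L ?n r) Mx)" using Mx_max[of "insert (vs, ng L ?n r) Mx"] nn by blast
  obtain us1 xs1 where u1: "distinct us1" "set xs1 \<subseteq> Ib us1 (insert (vs, r) Mx)"
    "big_mt L (length us1) xs1 = zer L (length us1)"
    using nc1 ph1 unfolding cons_def by blast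
  obtain us2 xs2 where u2: "distinct us2" "set xs2 \<subseteq> Ib us2 (insert (vs, ng L ?n r) Mx)"
    "big_mt L (length us2) xs2 = zer L (length us2)"
    using nc2 ph2 unfolding cons_def by blast
  define us where "us = remdups (vs @ us1 @ us2)"
  have dus: "distinct us" by (simp add: us_def)
  have sub: "set vs \<subseteq> set us" "set us1 \<subseteq> set us" "set us2 \<subseteq> set us" by (auto simp: us_def)
  define R where "R = sb L ?n (length us) (emb vs us) r"
  have svs: "is_subst ?n (length us) (emb vs us)" using is_subst_emb sub by blast
  have Rin: "R \<in> car L (length us)" using svs vr by (simp add: R_def)
  have ngR: "sb L ?n (length us) (emb vs us) (ng L ?n r) = ng L (length us) R"
    using sb_ng[OF svs vr(2)] by (simp add: R_def)
  define ys1 where "ys1 = map (sb L (length us1) (length us) (emb us1 us)) xs1"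
  define ys2 where "ys2 = map (sb L (length us2) (length us) (emb us2 us)) xs2"
  have y1: "set ys1 \<subseteq> insert R (Ib us Mx)"
    using transport[OF ph1 sub(2) u1(2)] Ib_insert[OF sub(1)] by (simp add: ys1_def R_def)
  have y2: "set ys2 \<subseteq> insert (ng L (length us) R) (Ib us Mx)"
    using transport[OF ph2 sub(3) u2(2)] Ib_insert[OF sub(1)] ngR by (simp add: ys2_def)
  have s1: "is_subst (length us1) (length us) (emb us1 us)" using is_subst_emb sub by blast
  have s2: "is_subst (length us2) (length us) (emb us2 us)" using is_subst_emb sub by blast
  have x1c: "set xs1 \<subseteq> car L (length us1)" using u1(2) Ib_car[OF ph1] by blast
  have x2c: "set xs2 \<subseteq> car L (length us2)" using u2(2) Ib_car[OF ph2] by blast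
  have z1: "big_mt L (length us) ys1 = zer L (length us)"
    using sb_big_mt[OF s1 x1c, symmetric] u1(3) sb_zer[OF s1] by (simp add: ys1_def)
  have z2: "big_mt L (length us) ys2 = zer L (length us)"
    using sb_big_mt[OF s2 x2c, symmetric] u2(3) sb_zer[OF s2] by (simp add: ys2_def)
  define zs where "zs = filter (\<lambda>x. x \<in> Ib us Mx) (ys1 @ ys2)"
  have zsI: "set zs \<subseteq> Ib us Mx" by (auto simp: zs_def)
  have zsc: "set zs \<subseteq> car L (length us)" using zsI Ib_car[OF Mx_Phi] by blast
  have Xnz: "big_mt L (length us) zs \<noteq> zer L (length us)" using Mx_nz[OF dus zsI] .
  have "set ys1 \<subseteq> set (R # zs)" using y1 by (auto simp: zs_def)
  then have "big_mt L (length us) (R # zs) = zer L (length us)"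
    using big_mt_zero[OF _ _ z1] Rin zsc by simp
  then have m1: "mt L (length us) R (big_mt L (length us) zs) = zer L (length us)" by (simp add: big_mt_def)
  have "set ys2 \<subseteq> set (ng L (length us) R # zs)" using y2 by (auto simp: zs_def)
  then have "big_mt L (length us) (ng L (length us) R # zs) = zer L (length us)"
    using big_mt_zero[OF _ _ z2] Rin zsc by simp
  then have m2: "mt L (length us) (ng L (length us) R) (big_mt L (length us) zs) = zer L (length us)"
    by (simp add: big_mt_def)
  have "big_mt L (length us) zs = zer L (length us)"
    using contr[OF big_mt_in[OF zsc] Rin m1 m2] .
  then show False using Xnz by simp
qed

lemma M_nz: "distinct vs \<Longrightarrow> set rs \<subseteq> car L (length vs) \<Longrightarrow> \<forall>r\<in>set rs. (vs, r) \<in> Mx \<Longrightarrow>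
   big_mt L (length vs) rs \<noteq> zer L (length vs)"
  using Mx_nz[of vs rs] Ib_self[OF _ _ Mx_Phi] by blast

lemma t_ng: "distinct vs \<Longrightarrow> r \<in> car L (length vs) \<Longrightarrow>
   (vs, ng L (length vs) r) \<in> Mx \<longleftrightarrow> (vs, r) \<notin> Mx"
proof -
  assume a: "distinct vs" "r \<in> car L (length vs)"
  have "\<not> ((vs, r) \<in> Mx \<and> (vs, ng L (length vs) r) \<in> Mx)"
    using M_nz[OF a(1), of "[r, ng L (length vs) r]"] a by (auto simp: big_mt_def mt_one compl2)
  then show ?thesis using M_compl[OF a] by blast
qed

lemma t_zer: "distinct vs \<Longrightarrow> (vs, zer L (length vs)) \<notin> Mx"
  using M_nz[of vs "[zer L (length vs)]"] by (auto simp: big_mt_def mt_one)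

lemma t_one: "distinct vs \<Longrightarrow> (vs, one L (length vs)) \<in> Mx"
  using t_ng[of vs "one L (length vs)"] t_zer[of vs] ng_one[of "length vs"] by simp

lemma t_mt: "distinct vs \<Longrightarrow> r \<in> car L (length vs) \<Longrightarrow> s \<in> car L (length vs) \<Longrightarrow>
   (vs, mt L (length vs) r s) \<in> Mx \<longleftrightarrow> (vs, r) \<in> Mx \<and> (vs, s) \<in> Mx"
proof -
  assume a: "distinct vs" "r \<in> car L (length vs)" "s \<in> car L (length vs)"
  let ?n = "length vs"
  have 1: "(vs, r) \<in> Mx" if "(vs, mt L ?n r s) \<in> Mx"
  proof (rule ccontr)
    assume "(vs, r) \<notin> Mx"
    then have "(vs, ng L ?n r) \<in> Mx" using t_ng a by blast
    then show False using M_nz[OF a(1), of "[mt L ?n r s, ng L ?n r]"] a that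
      by (simp add: big_mt_def mt_one B1)
  qed
  have 2: "(vs, s) \<in> Mx" if "(vs, mt L ?n r s) \<in> Mx"
  proof (rule ccontr)
    assume "(vs, s) \<notin> Mx"
    then have "(vs, ng L ?n s) \<in> Mx" using t_ng a by blast
    then show False using M_nz[OF a(1), of "[mt L ?n s r, ng L ?n s]"] a that mt_comm[of r ?n s]
      by (simp add: big_mt_def mt_one B1)
  qed
  have 3: "(vs, mt L ?n r s) \<in> Mx" if "(vs, r) \<in> Mx" "(vs, s) \<in> Mx"
  proof (rule ccontr)
    assume "(vs, mt L ?n r s) \<notin> Mx"
    then have "(vs, ng L ?n (mt L ?n r s)) \<in> Mx" using t_ng a by simp
    then show False using M_nz[OF a(1), of "[r, s, ng L ?n (mt L ?n r s)]"] a that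
      by (simp add: big_mt_def mt_one B2)
  qed
  show ?thesis using 1 2 3 by blast
qed

lemma t_jn: "distinct vs \<Longrightarrow> r \<in> car L (length vs) \<Longrightarrow> s \<in> car L (length vs) \<Longrightarrow>
   (vs, jn L (length vs) r s) \<in> Mx \<longleftrightarrow> (vs, r) \<in> Mx \<or> (vs, s) \<in> Mx"
proof -
  assume a: "distinct vs" "r \<in> car L (length vs)" "s \<in> car L (length vs)"
  let ?n = "length vs"
  have 1: "(vs, jn L ?n r s) \<in> Mx" if "(vs, r) \<in> Mx"
  proof (rule ccontr)
    assume "(vs, jn L ?n r s) \<notin> Mx"
    then have "(vs, ng L ?n (jn L ?n r s)) \<in> Mx" using t_ng a by simp
    then show False using M_nz[OF a(1), of "[r, ng L ?n (jn L ?n r s)]"] a that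
      by (simp add: big_mt_def mt_one B3)
  qed
  have 2: "(vs, jn L ?n r s) \<in> Mx" if "(vs, s) \<in> Mx"
  proof (rule ccontr)
    assume "(vs, jn L ?n r s) \<notin> Mx"
    then have "(vs, ng L ?n (jn L ?n s r)) \<in> Mx" using t_ng a jn_comm[of r ?n s] by simp
    then show False using M_nz[OF a(1), of "[s, ng L ?n (jn L ?n s r)]"] a that
      by (simp add: big_mt_def mt_one B3)
  qed
  have 3: "(vs, r) \<in> Mx \<or> (vs, s) \<in> Mx" if "(vs, jn L ?n r s) \<in> Mx"
  proof (rule ccontr)
    assume "\<not> ((vs, r) \<in> Mx \<or> (vs, s) \<in> Mx)"
    then have "(vs, ng L ?n r) \<in> Mx" "(vs, ng L ?n s) \<in> Mx" using t_ng a by auto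
    then show False using M_nz[OF a(1), of "[jn L ?n r s, ng L ?n r, ng L ?n s]"] a that
      by (simp add: big_mt_def mt_one B4)
  qed
  show ?thesis using 1 2 3 by blast
qed

lemma cons_pair:
  assumes "(vs1, r1) \<in> Mx" "(vs2, r2) \<in> Mx" "distinct us" "set vs1 \<subseteq> set us" "set vs2 \<subseteq> set us"
  shows "mt L (length us) (sb L (length vs1) (length us) (emb vs1 us) r1)
           (sb L (length vs2) (length us) (emb vs2 us) r2) \<noteq> zer L (length us)"
proof -
  let ?a = "sb L (length vs1) (length us) (emb vs1 us) r1"
  let ?b = "sb L (length vs2) (length us) (emb vs2 us) r2"
  have "set [?a, ?b] \<subseteq> Ib us Mx" using assms unfolding Ib_def by force
  moreover have "?b \<in> car L (length us)" using Ib_car[OF Mx_Phi] calculation by auto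
  ultimately show ?thesis using Mx_nz[OF assms(3), of "[?a, ?b]"] by (simp add: big_mt_def mt_one)
qed

lemma coh:
  assumes d: "distinct vs'" "distinct vs" "set vs' \<subseteq> set vs" and r: "r \<in> car L (length vs')"
  shows "(vs', r) \<in> Mx \<longleftrightarrow> (vs, sb L (length vs') (length vs) (emb vs' vs) r) \<in> Mx"
proof -
  let ?E = "sb L (length vs') (length vs) (emb vs' vs) r"
  have s: "is_subst (length vs') (length vs) (emb vs' vs)" using is_subst_emb d by blast
  have E: "?E \<in> car L (length vs)" using s r by simp
  have idE: "sb L (length vs) (length vs) (emb vs vs) x = x" if "x \<in> car L (length vs)" for x
    using emb_self[OF d(2)] sb_id[OF that] by simp
  show ?thesis
  proof
    assume m: "(vs', r) \<in> Mx"
    show "(vs, ?E) \<in> Mx"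
    proof (rule ccontr)
      assume "(vs, ?E) \<notin> Mx"
      then have "(vs, ng L (length vs) ?E) \<in> Mx" using t_ng[OF d(2) E] by simp
      from cons_pair[OF m this d(2) d(3) order_refl] show False
        using idE[OF ng_in[OF E]] compl2[OF E] by simp
    qed
  next
    assume m: "(vs, ?E) \<in> Mx"
    show "(vs', r) \<in> Mx"
    proof (rule ccontr)
      assume "(vs', r) \<notin> Mx"
      then have "(vs', ng L (length vs') r) \<in> Mx" using t_ng[OF d(1) r] by simp
      from cons_pair[OF m this d(2) order_refl d(3)] show False
        using idE[OF E] compl2[OF E] sb_ng[OF s r] by simp
    qed
  qed
qed

end


lemma tuples_UNIV: "tuples UNIV n = {xs. length xs = n}"
  by (simp add: tuples_def)

lemma subst_tuple_nth: "j < n \<Longrightarrow> subst_tuple n \<beta> ws ! j = ws ! (\<beta> (Suc j) - 1)"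
  by (simp add: subst_tuple_def del: upt_Suc)

lemma subst_tuple_len[simp]: "length (subst_tuple n \<beta> ws) = n"
  by (simp add: subst_tuple_def del: upt_Suc)

lemma subst_tuple_set: "is_subst n k \<beta> \<Longrightarrow> length ws = k \<Longrightarrow> set (subst_tuple n \<beta> ws) \<subseteq> set ws"
proof
  fix x assume b: "is_subst n k \<beta>" "length ws = k" and "x \<in> set (subst_tuple n \<beta> ws)"
  then obtain j where j: "j < n" "x = subst_tuple n \<beta> ws ! j" by (auto simp: in_set_conv_nth)
  have "\<beta> (Suc j) \<in> {1..k}" using b(1) j(1) unfolding is_subst_def by auto
  then have "\<beta> (Suc j) - 1 < length ws" using b(2) by auto
  then have "ws ! (\<beta> (Suc j) - 1) \<in> set ws" by (rule nth_mem)
  then show "x \<in> set ws" using j subst_tuple_nth[OF j(1), of \<beta> ws] by simp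
qed

lemma emb_subst_tuple:
  assumes b: "is_subst n k \<beta>" and l: "length ws = k" and V: "set ws \<subseteq> set V"
  shows "emb (subst_tuple n \<beta> ws) V = emb ws V \<circ> \<beta>"
proof (rule ext)
  fix i
  show "emb (subst_tuple n \<beta> ws) V i = (emb ws V \<circ> \<beta>) i"
  proof (cases "1 \<le> i \<and> i \<le> n")
    case True
    have bi: "\<beta> i \<in> {1..k}" using b True unfolding is_subst_def by auto
    have eq: "subst_tuple n \<beta> ws ! (i - 1) = ws ! (\<beta> i - 1)"
    proof -
      have "i - 1 < n" using True by linarith
      then show ?thesis using subst_tuple_nth[of "i - 1" n \<beta> ws] True by simp
    qed
    have mem: "ws ! (\<beta> i - 1) \<in> set V" using bi l V by (intro subsetD[OF V] nth_mem) auto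
    have "emb (subst_tuple n \<beta> ws) V i = pos V (ws ! (\<beta> i - 1)) + 1"
      using True eq mem by (subst emb_in) auto
    moreover have "emb ws V (\<beta> i) = pos V (ws ! (\<beta> i - 1)) + 1"
      using bi l mem by (subst emb_in) auto
    ultimately show ?thesis by simp
  next
    case False
    then have "\<beta> i = 0" using b unfolding is_subst_def by auto
    then show ?thesis using False by (simp add: emb_out)
  qed
qed

context QAN begin

definition hh :: "nat \<Rightarrow> 'a \<Rightarrow> 'a var list set" where
  "hh n r = {ws. length ws = n \<and> (remdups ws, sb L n (length (remdups ws)) (emb ws (remdups ws)) r) \<in> Mx}"

lemma ws_subst: "is_subst (length ws) (length (remdups ws)) (emb ws (remdups ws))"
  using is_subst_emb[of ws "remdups ws"] by simp

lemma mem_hh: "ws \<in> hh n r \<longleftrightarrow> length ws = n \<and>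
   (remdups ws, sb L (length ws) (length (remdups ws)) (emb ws (remdups ws)) r) \<in> Mx"
  by (auto simp: hh_def)

lemma hh_zer: "hh n (zer L n) = {}"
proof -
  have "ws \<notin> hh (length ws) (zer L (length ws))" for ws
    using t_zer[of "remdups ws"] sb_zer[OF ws_subst[of ws]] by (simp add: mem_hh)
  then show ?thesis by (auto simp: mem_hh)
qed

lemma hh_one: "hh n (one L n) = {ws. length ws = n}"
proof -
  have "ws \<in> hh (length ws) (one L (length ws))" for ws
    using t_one[of "remdups ws"] sb_one[OF ws_subst[of ws]] by (simp add: mem_hh)
  then show ?thesis by (auto simp: mem_hh)
qed

lemma hh_mt: "x \<in> car L n \<Longrightarrow> y \<in> car L n \<Longrightarrow> hh n (mt L n x y) = hh n x \<inter> hh n y"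
proof (rule set_eqI)
  fix ws assume a: "x \<in> car L n" "y \<in> car L n"
  show "ws \<in> hh n (mt L n x y) \<longleftrightarrow> ws \<in> hh n x \<inter> hh n y"
  proof (cases "length ws = n")
    case True
    have s: "is_subst n (length (remdups ws)) (emb ws (remdups ws))" using ws_subst[of ws] True by simp
    show ?thesis using True sb_mt[OF s a] t_mt[of "remdups ws"] s a by (simp add: mem_hh)
  qed (simp add: mem_hh)
qed

lemma hh_jn: "x \<in> car L n \<Longrightarrow> y \<in> car L n \<Longrightarrow> hh n (jn L n x y) = hh n x \<union> hh n y"
proof (rule set_eqI)
  fix ws assume a: "x \<in> car L n" "y \<in> car L n"
  show "ws \<in> hh n (jn L n x y) \<longleftrightarrow> ws \<in> hh n x \<union> hh n y"
  proof (cases "length ws = n")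
    case True
    have s: "is_subst n (length (remdups ws)) (emb ws (remdups ws))" using ws_subst[of ws] True by simp
    show ?thesis using True sb_jn[OF s a] t_jn[of "remdups ws"] s a by (simp add: mem_hh)
  qed (simp add: mem_hh)
qed

lemma hh_ng: "x \<in> car L n \<Longrightarrow> hh n (ng L n x) = {ws. length ws = n} - hh n x"
proof (rule set_eqI)
  fix ws assume a: "x \<in> car L n"
  show "ws \<in> hh n (ng L n x) \<longleftrightarrow> ws \<in> {ws. length ws = n} - hh n x"
  proof (cases "length ws = n")
    case True
    have s: "is_subst n (length (remdups ws)) (emb ws (remdups ws))" using ws_subst[of ws] True by simp
    show ?thesis using True sb_ng[OF s a] t_ng[of "remdups ws"] s a by (simp add: mem_hh)
  qed (simp add: mem_hh)
qed

lemma hh_sb: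
  assumes b: "is_subst n k \<beta>" and x: "x \<in> car L n"
  shows "hh k (sb L n k \<beta> x) = subst_rel UNIV n k \<beta> (hh n x)"
proof (rule set_eqI)
  fix ws
  show "ws \<in> hh k (sb L n k \<beta> x) \<longleftrightarrow> ws \<in> subst_rel UNIV n k \<beta> (hh n x)"
  proof (cases "length ws = k")
    case False then show ?thesis by (simp add: mem_hh subst_rel_def tuples_def)
  next
    case True
    define V where "V = remdups ws"
    define u where "u = subst_tuple n \<beta> ws"
    define V' where "V' = remdups u"
    have sV: "is_subst k (length V) (emb ws V)" using ws_subst[of ws] True by (simp add: V_def)
    have uws: "set u \<subseteq> set ws" using subst_tuple_set[OF b True] by (simp add: u_def)
    have V'V: "set V' \<subseteq> set V" using uws by (simp add: V_def V'_def)
    have lu: "length u = n" by (simp add: u_def)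
    have xu: "x \<in> car L (length u)" using x lu by simp
    have "ws \<in> hh k (sb L n k \<beta> x) \<longleftrightarrow> (V, sb L n (length V) (emb ws V \<circ> \<beta>) x) \<in> Mx"
      using True sb_comp[OF b sV x] by (simp add: mem_hh V_def)
    also have "emb ws V \<circ> \<beta> = emb u V" using emb_subst_tuple[OF b True] by (simp add: u_def V_def)
    also have "sb L n (length V) (emb u V) x =
        sb L (length V') (length V) (emb V' V) (sb L (length u) (length V') (emb u V') x)"
      using sb_emb_comp[of u V' V x] V'V xu lu by (simp add: V'_def)
    also have "(V, \<dots>) \<in> Mx \<longleftrightarrow> (V', sb L (length u) (length V') (emb u V') x) \<in> Mx"
    proof (rule coh[symmetric])
      show "distinct V'" "distinct V" "set V' \<subseteq> set V" using V'V by (simp_all add: V_def V'_def)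
      show "sb L (length u) (length V') (emb u V') x \<in> car L (length V')"
        using is_subst_emb[of u V'] xu by (simp add: V'_def)
    qed
    also have "\<dots> \<longleftrightarrow> u \<in> hh n x" using lu by (simp add: mem_hh V'_def)
    also have "\<dots> \<longleftrightarrow> ws \<in> subst_rel UNIV n k \<beta> (hh n x)"
      using True by (simp add: subst_rel_def tuples_def u_def)
    finally show ?thesis .
  qed
qed

lemma hh_inj: "x \<in> car L n \<Longrightarrow> y \<in> car L n \<Longrightarrow> hh n x = hh n y \<Longrightarrow> x = y"
proof (rule ccontr)
  assume a: "x \<in> car L n" "y \<in> car L n" "hh n x = hh n y" "x \<noteq> y"
  define ws where "ws = blk n x y"
  have rd: "remdups ws = ws" by (simp add: ws_def)
  have lw: "length ws = n" by (simp add: ws_def)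
  have dw: "distinct ws" by (simp add: ws_def)
  have memz: "ws \<in> hh n z \<longleftrightarrow> (ws, z) \<in> Mx" if "z \<in> car L n" for z
    using emb_self[OF dw] sb_id[of z n] that lw by (simp add: mem_hh rd)
  have e: "(ws, ee n x y) \<in> Mx" using D_Mx a by (auto simp: D_def ws_def)
  show False
  proof (cases "mt L n x (ng L n y) \<noteq> zer L n")
    case True
    then have "(ws, mt L n x (ng L n y)) \<in> Mx" using e by (simp add: ee_def)
    then have "(ws, x) \<in> Mx" "(ws, y) \<notin> Mx" using t_mt[of ws x "ng L n y"] t_ng[of ws y] a dw lw by auto
    then show False using memz a by blast
  next
    case False
    then have "(ws, mt L n y (ng L n x)) \<in> Mx" using e by (simp add: ee_def)
    then have "(ws, y) \<in> Mx" "(ws, x) \<notin> Mx" using t_mt[of ws y "ng L n x"] t_ng[of ws x] a dw lw by auto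
    then show False using memz a by blast
  qed
qed

lemma embedding: "qf_embedding L UNIV hh"
  unfolding qf_embedding_def Let_def qf_algebra_of_def
  by (auto simp: tuples_UNIV inj_on_def hh_inj hh_zer hh_one hh_mt hh_jn hh_ng hh_sb mem_hh)

end


lemma tuples_empty: "tuples {} n = (if n = 0 then {[]} else {})"
  by (auto simp: tuples_def)

context QA begin

lemma deg_zero:
  assumes dg: "one L 1 = zer L 1" and n: "n \<ge> 1" and x: "x \<in> car L n"
  shows "x = zer L n"
proof -
  define \<beta> where "\<beta> = (\<lambda>i::nat. if i = 1 then 1::nat else 0)"
  have b: "is_subst 1 n \<beta>" using n by (simp add: is_subst_def \<beta>_def)
  have "one L n = zer L n" using sb_one[OF b] sb_zer[OF b] dg by metis
  then show ?thesis using mt_one[OF x] mt_zer[OF x] by simp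
qed

definition hd :: "nat \<Rightarrow> 'a \<Rightarrow> 'a var list set" where
  "hd n r = (if n = 0 \<and> r = one L 0 then {[]} else {})"

lemma jn0: "x \<in> car L 0 \<Longrightarrow> y \<in> car L 0 \<Longrightarrow> hd 0 (jn L 0 x y) = hd 0 x \<union> hd 0 y"
proof -
  assume x: "x \<in> car L 0" and y: "y \<in> car L 0"
  have j11: "jn L 0 (one L 0) (one L 0) = one L 0"
    using jn_abs[of "one L 0" 0 "one L 0"] mt_one[of "one L 0" 0] by simp
  show ?thesis
    using L0_cases[OF x] L0_cases[OF y] one0_ne_zer0 j11
    by (auto simp: hd_def jn_zer jn_zer')
qed

lemma mt0: "x \<in> car L 0 \<Longrightarrow> y \<in> car L 0 \<Longrightarrow> hd 0 (mt L 0 x y) = hd 0 x \<inter> hd 0 y"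
proof -
  assume x: "x \<in> car L 0" and y: "y \<in> car L 0"
  show ?thesis
    using L0_cases[OF x] L0_cases[OF y] one0_ne_zer0
    by (auto simp: hd_def zer_mt one_mt mt_zer mt_one)
qed

lemma deg_embedding:
  assumes dg: "one L 1 = zer L 1"
  shows "qf_embedding L {} hd"
proof -
  have dz: "x = zer L n" if "n \<noteq> 0" "x \<in> car L n" for n x using deg_zero[OF dg _ that(2)] that(1) by simp
  have inj: "inj_on (hd n) (car L n)" for n
  proof (cases "n = 0")
    case True
    show ?thesis unfolding inj_on_def
      using L0_cases one0_ne_zer0 True by (auto simp: hd_def)
  next
    case False
    then show ?thesis unfolding inj_on_def using dz by metis
  qed
  have sub: "hd n ` car L n \<subseteq> Pow (tuples {} n)" for n by (auto simp: hd_def tuples_empty)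
  have z: "hd n (zer L n) = {}" for n using one0_ne_zer0 by (auto simp: hd_def)
  have o: "hd n (one L n) = tuples {} n" for n by (auto simp: hd_def tuples_empty)
  have j: "hd n (jn L n x y) = hd n x \<union> hd n y" if "x \<in> car L n" "y \<in> car L n" for n x y
    using jn0 that by (cases "n = 0") (auto simp: hd_def)
  have m: "hd n (mt L n x y) = hd n x \<inter> hd n y" if "x \<in> car L n" "y \<in> car L n" for n x y
    using mt0 that by (cases "n = 0") (auto simp: hd_def)
  have ngg: "hd n (ng L n x) = tuples {} n - hd n x" if "x \<in> car L n" for n x
  proof (cases "n = 0")
    case True
    then show ?thesis using L0_cases[of x] that one0_ne_zer0 ng_one[of 0] ng_zer[of 0]
      by (auto simp: hd_def tuples_empty)
  next
    case False then show ?thesis by (simp add: hd_def tuples_empty)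
  qed
  have s: "hd k (sb L n k \<alpha> x) = subst_rel {} n k \<alpha> (hd n x)" if "is_subst n k \<alpha>" "x \<in> car L n" for n k \<alpha> x
  proof (cases "k = 0")
    case False then show ?thesis by (simp add: hd_def subst_rel_def tuples_empty)
  next
    case True
    have n0: "n = 0"
    proof (rule ccontr)
      assume "n \<noteq> 0"
      then have "\<alpha> 1 \<in> {1..k}" using that(1) unfolding is_subst_def by auto
      then show False using True by simp
    qed
    have "\<alpha> = id_subst 0" using that(1) n0 unfolding is_subst_def id_subst_def by auto
    then have "sb L n k \<alpha> x = x" using sb_id that True n0 by simp
    moreover have "subst_rel {} 0 0 \<alpha> R = R \<inter> {[]}" for R
      by (auto simp: subst_rel_def tuples_empty subst_tuple_def)
    ultimately show ?thesis using True n0 by (auto simp: hd_def)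
  qed
  show ?thesis unfolding qf_embedding_def Let_def qf_algebra_of_def
    using inj sub z o j m ngg s by simp
qed

end

context QAN begin
lemma emb_UNIV: "embeds_in_qf L (UNIV :: 'a var set)"
  unfolding embeds_in_qf_def using embedding by blast
end



lemma is_subst_comp: "is_subst k n \<alpha> \<Longrightarrow> is_subst n m \<beta> \<Longrightarrow> is_subst k m (\<beta> \<circ> \<alpha>)"
  unfolding is_subst_def by fastforce

lemma is_subst_id: "is_subst n n (id_subst n)"
  by (simp add: is_subst_def id_subst_def)

lemma subst_tuple_tuples: "is_subst n k \<beta> \<Longrightarrow> xs \<in> tuples W k \<Longrightarrow> subst_tuple n \<beta> xs \<in> tuples W n"
  using subst_tuple_set[of n k \<beta> xs] by (auto simp: tuples_def)

lemma subst_tuple_comp: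
  assumes a: "is_subst k n \<alpha>" and b: "is_subst n m \<beta>" and l: "length xs = m"
  shows "subst_tuple k \<alpha> (subst_tuple n \<beta> xs) = subst_tuple k (\<beta> \<circ> \<alpha>) xs"
proof (rule nth_equalityI)
  show "length (subst_tuple k \<alpha> (subst_tuple n \<beta> xs)) = length (subst_tuple k (\<beta> \<circ> \<alpha>) xs)" by simp
  fix j assume "j < length (subst_tuple k \<alpha> (subst_tuple n \<beta> xs))"
  then have j: "j < k" by simp
  have ai: "\<alpha> (Suc j) \<in> {1..n}" using a j unfolding is_subst_def by auto
  then have "\<alpha> (Suc j) - 1 < n" by auto
  then have "subst_tuple n \<beta> xs ! (\<alpha> (Suc j) - 1) = xs ! (\<beta> (Suc (\<alpha> (Suc j) - 1)) - 1)"
    by (rule subst_tuple_nth)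
  moreover have "Suc (\<alpha> (Suc j) - 1) = \<alpha> (Suc j)" using ai by auto
  ultimately show "subst_tuple k \<alpha> (subst_tuple n \<beta> xs) ! j = subst_tuple k (\<beta> \<circ> \<alpha>) xs ! j"
    using j by (simp add: subst_tuple_nth)
qed

lemma subst_rel_comp:
  "is_subst k n \<alpha> \<Longrightarrow> is_subst n m \<beta> \<Longrightarrow>
   subst_rel W k m (\<beta> \<circ> \<alpha>) R = subst_rel W n m \<beta> (subst_rel W k n \<alpha> R)"
proof (rule set_eqI)
  fix xs assume a: "is_subst k n \<alpha>" "is_subst n m \<beta>"
  show "xs \<in> subst_rel W k m (\<beta> \<circ> \<alpha>) R \<longleftrightarrow> xs \<in> subst_rel W n m \<beta> (subst_rel W k n \<alpha> R)"
  proof (cases "xs \<in> tuples W m")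
    case True
    have t: "subst_tuple n \<beta> xs \<in> tuples W n" using subst_tuple_tuples[OF a(2) True] .
    have e: "subst_tuple k \<alpha> (subst_tuple n \<beta> xs) = subst_tuple k (\<beta> \<circ> \<alpha>) xs"
      using subst_tuple_comp[OF a] True by (auto simp: tuples_def)
    show ?thesis using t e True by (simp add: subst_rel_def)
  qed (simp add: subst_rel_def)
qed

lemma subst_tuple_id: "length xs = n \<Longrightarrow> subst_tuple n (id_subst n) xs = xs"
  by (rule nth_equalityI) (auto simp: subst_tuple_nth id_subst_def)

lemma subst_rel_id: "R \<subseteq> tuples W n \<Longrightarrow> subst_rel W n n (id_subst n) R = R"
proof (rule set_eqI)
  fix xs assume R: "R \<subseteq> tuples W n"
  show "xs \<in> subst_rel W n n (id_subst n) R \<longleftrightarrow> xs \<in> R"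
  proof (cases "xs \<in> tuples W n")
    case True
    then have "subst_tuple n (id_subst n) xs = xs" using subst_tuple_id by (auto simp: tuples_def)
    then show ?thesis using True by (simp add: subst_rel_def)
  next
    case False then show ?thesis using R by (auto simp: subst_rel_def)
  qed
qed

lemma subst_rel_compl: "is_subst n k \<alpha> \<Longrightarrow>
   subst_rel W n k \<alpha> (tuples W n - R) = tuples W k - subst_rel W n k \<alpha> R"
  unfolding subst_rel_def using subst_tuple_tuples by blast

lemma subst_rel_tuples: "is_subst n k \<alpha> \<Longrightarrow> subst_rel W n k \<alpha> (tuples W n) = tuples W k"
  unfolding subst_rel_def using subst_tuple_tuples by blast

locale EMB =
  fixes L :: "'a qf_alg" and W :: "'w set" and h :: "nat \<Rightarrow> 'a \<Rightarrow> 'w list set"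
  assumes alg: "qf_multisorted_algebra L" and emb: "qf_embedding L W h"
begin

lemma c_zer[simp]: "zer L n \<in> car L n" using alg unfolding qf_multisorted_algebra_def by blast
lemma c_one[simp]: "one L n \<in> car L n" using alg unfolding qf_multisorted_algebra_def by blast
lemma c_jn[simp]: "x \<in> car L n \<Longrightarrow> y \<in> car L n \<Longrightarrow> jn L n x y \<in> car L n"
  using alg unfolding qf_multisorted_algebra_def by blast
lemma c_mt[simp]: "x \<in> car L n \<Longrightarrow> y \<in> car L n \<Longrightarrow> mt L n x y \<in> car L n"
  using alg unfolding qf_multisorted_algebra_def by blast
lemma c_ng[simp]: "x \<in> car L n \<Longrightarrow> ng L n x \<in> car L n"
  using alg unfolding qf_multisorted_algebra_def by blast
lemma c_sb[simp]: "is_subst n k \<alpha> \<Longrightarrow> x \<in> car L n \<Longrightarrow> sb L n k \<alpha> x \<in> car L k"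
  using alg unfolding qf_multisorted_algebra_def by blast

lemma inj: "x \<in> car L n \<Longrightarrow> y \<in> car L n \<Longrightarrow> h n x = h n y \<Longrightarrow> x = y"
  using emb unfolding qf_embedding_def Let_def by (meson inj_onD)
lemma hsub: "x \<in> car L n \<Longrightarrow> h n x \<subseteq> tuples W n"
  using emb unfolding qf_embedding_def Let_def qf_algebra_of_def by auto
lemma hz[simp]: "h n (zer L n) = {}"
  using emb unfolding qf_embedding_def Let_def qf_algebra_of_def by auto
lemma ho[simp]: "h n (one L n) = tuples W n"
  using emb unfolding qf_embedding_def Let_def qf_algebra_of_def by auto
lemma hj[simp]: "x \<in> car L n \<Longrightarrow> y \<in> car L n \<Longrightarrow> h n (jn L n x y) = h n x \<union> h n y"
  using emb unfolding qf_embedding_def Let_def qf_algebra_of_def by auto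
lemma hm[simp]: "x \<in> car L n \<Longrightarrow> y \<in> car L n \<Longrightarrow> h n (mt L n x y) = h n x \<inter> h n y"
  using emb unfolding qf_embedding_def Let_def qf_algebra_of_def by auto
lemma hn[simp]: "x \<in> car L n \<Longrightarrow> h n (ng L n x) = tuples W n - h n x"
  using emb unfolding qf_embedding_def Let_def qf_algebra_of_def by auto
lemma hs[simp]: "is_subst n k \<alpha> \<Longrightarrow> x \<in> car L n \<Longrightarrow> h k (sb L n k \<alpha> x) = subst_rel W n k \<alpha> (h n x)"
  using emb unfolding qf_embedding_def Let_def qf_algebra_of_def by auto

lemma ax1: "ax1 L"
  unfolding ax1_def
proof (intro allI ballI conjI)
  fix n x y z assume xyz: "x \<in> car L n" "y \<in> car L n" "z \<in> car L n"
  note hx = hsub[OF xyz(1)]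
  show "jn L n (jn L n x y) z = jn L n x (jn L n y z)" by (rule inj[where n=n]) (auto simp: xyz)
  show "mt L n (mt L n x y) z = mt L n x (mt L n y z)" by (rule inj[where n=n]) (auto simp: xyz)
  show "jn L n x y = jn L n y x" by (rule inj[where n=n]) (auto simp: xyz)
  show "mt L n x y = mt L n y x" by (rule inj[where n=n]) (auto simp: xyz)
  show "jn L n x (mt L n x y) = x" by (rule inj[where n=n]) (auto simp: xyz)
  show "mt L n x (jn L n x y) = x" by (rule inj[where n=n]) (auto simp: xyz)
  show "jn L n x (zer L n) = x" by (rule inj[where n=n]) (auto simp: xyz)
  show "mt L n x (one L n) = x" by (rule inj[where n=n]) (use hx in \<open>auto simp: xyz\<close>)
  show "mt L n x (jn L n y z) = jn L n (mt L n x y) (mt L n x z)" by (rule inj[where n=n]) (auto simp: xyz)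
qed

lemma ax6: "ax6 L"
  unfolding ax6_def
proof (intro allI ballI conjI)
  fix n r assume r: "r \<in> car L n"
  note hr = hsub[OF r]
  show "jn L n r (ng L n r) = one L n" by (rule inj[where n=n]) (use hr r in auto)
  show "mt L n r (ng L n r) = zer L n" by (rule inj[where n=n]) (use hr r in auto)
qed

lemma ax2: "ax2 L"
  unfolding ax2_def
proof (intro allI impI ballI conjI)
  fix n k \<alpha> assume a: "is_subst n k \<alpha>"
  show "sb L n k \<alpha> (zer L n) = zer L k" by (rule inj[where n=k]) (use a in \<open>auto simp: subst_rel_def\<close>)
  show "sb L n k \<alpha> (one L n) = one L k" by (rule inj[where n=k]) (use a in \<open>auto simp: subst_rel_tuples\<close>)
  fix x y assume xy: "x \<in> car L n" "y \<in> car L n"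
  show "sb L n k \<alpha> (jn L n x y) = jn L k (sb L n k \<alpha> x) (sb L n k \<alpha> y)"
    by (rule inj[where n=k]) (use a xy in \<open>auto simp: subst_rel_def\<close>)
  show "sb L n k \<alpha> (mt L n x y) = mt L k (sb L n k \<alpha> x) (sb L n k \<alpha> y)"
    by (rule inj[where n=k]) (use a xy in \<open>auto simp: subst_rel_def\<close>)
qed

lemma ax3: "ax3 L"
  unfolding ax3_def
proof (intro allI impI ballI)
  fix k n m \<alpha> \<beta> r assume a: "is_subst k n \<alpha>" "is_subst n m \<beta>" "r \<in> car L k"
  have c: "is_subst k m (\<beta> \<circ> \<alpha>)" using is_subst_comp a by blast
  show "sb L k m (\<beta> \<circ> \<alpha>) r = sb L n m \<beta> (sb L k n \<alpha> r)"
    by (rule inj[where n=m]) (use a c subst_rel_comp[OF a(1,2)] in auto)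
qed

lemma ax4: "ax4 L"
  unfolding ax4_def
proof (intro allI ballI)
  fix n r assume r: "r \<in> car L n"
  show "sb L n n (id_subst n) r = r"
    by (rule inj[where n=n]) (use r is_subst_id subst_rel_id[OF hsub[OF r]] in auto)
qed

lemma ax5: "ax5 L"
  unfolding ax5_def
proof (intro allI impI ballI)
  fix n k \<alpha> r assume a: "is_subst n k \<alpha>" "r \<in> car L n"
  show "sb L n k \<alpha> (ng L n r) = ng L k (sb L n k \<alpha> r)"
    by (rule inj[where n=k]) (use a subst_rel_compl[OF a(1)] in auto)
qed

lemma bm_in: "set ys \<subseteq> car L N \<Longrightarrow> big_mt L N ys \<in> car L N"
  by (induction ys) (auto simp: big_mt_def)
lemma bj_in: "set ys \<subseteq> car L N \<Longrightarrow> big_jn L N ys \<in> car L N"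
  by (induction ys) (auto simp: big_jn_def)

lemma h_big_mt: "set ys \<subseteq> car L N \<Longrightarrow> h N (big_mt L N ys) = tuples W N \<inter> (\<Inter>y\<in>set ys. h N y)"
proof (induction ys)
  case Nil then show ?case by (simp add: big_mt_def)
next
  case (Cons y ys)
  have "big_mt L N ys \<in> car L N" using Cons(2)
  proof (induction ys)
    case Nil then show ?case by (simp add: big_mt_def)
  next
    case (Cons a ys) then show ?case by (simp add: big_mt_def)
  qed
  then show ?case using Cons hsub[of y N] by (auto simp: big_mt_def)
qed

lemma h_big_jn: "set ys \<subseteq> car L N \<Longrightarrow> h N (big_jn L N ys) = (\<Union>y\<in>set ys. h N y)"
proof (induction ys)
  case Nil then show ?case by (simp add: big_jn_def)
next
  case (Cons y ys)
  have "big_jn L N ys \<in> car L N" using Cons(2)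
  proof (induction ys)
    case Nil then show ?case by (simp add: big_jn_def)
  next
    case (Cons a ys) then show ?case by (simp add: big_jn_def)
  qed
  then show ?case using Cons by (auto simp: big_jn_def)
qed

lemma ax0: "ax0 L"
  unfolding ax0_def
proof (intro allI impI)
  fix ks :: "nat list" and rs ss
  assume lr: "length rs = length ks" and ls: "length ss = length ks"
    and mem: "\<forall>i<length ks. rs ! i \<in> car L (ks ! i) \<and> ss ! i \<in> car L (ks ! i)"
  let ?N = "sum_list ks"
  define X where "X = big_mt L ?N (map (\<lambda>i. sb L (ks ! i) ?N (cyl ks i) (rs ! i)) [0..<length ks])"
  define Y where "Y = big_jn L ?N (map (\<lambda>i. sb L (ks ! i) ?N (cyl ks i) (ss ! i)) [0..<length ks])"
  assume le: "le_in L ?N X Y"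
  show "\<exists>i<length ks. le_in L (ks ! i) (rs ! i) (ss ! i)"
  proof (rule ccontr)
    assume nle: "\<not> (\<exists>i<length ks. le_in L (ks ! i) (rs ! i) (ss ! i))"
    have "\<exists>x. x \<in> h (ks ! i) (rs ! i) \<and> x \<notin> h (ks ! i) (ss ! i)" if i: "i < length ks" for i
    proof (rule ccontr)
      assume "\<not> ?thesis"
      then have "h (ks ! i) (rs ! i) = h (ks ! i) (mt L (ks ! i) (rs ! i) (ss ! i))"
        using mem i by auto
      then have "rs ! i = mt L (ks ! i) (rs ! i) (ss ! i)" using mem i by (intro inj) auto
      then show False using nle i by (auto simp: le_in_def)
    qed
    then have "\<forall>i. \<exists>x. i < length ks \<longrightarrow> x \<in> h (ks ! i) (rs ! i) \<and> x \<notin> h (ks ! i) (ss ! i)"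
      by blast
    from choice[OF this] obtain f where f0: "\<forall>i. i < length ks \<longrightarrow> f i \<in> h (ks ! i) (rs ! i) \<and> f i \<notin> h (ks ! i) (ss ! i)"
      by blast
    have f: "f i \<in> h (ks ! i) (rs ! i)" "f i \<notin> h (ks ! i) (ss ! i)" if "i < length ks" for i
      using f0 that by blast+
    define bs where "bs = map f [0..<length ks]"
    have ft: "f i \<in> tuples W (ks ! i)" if "i < length ks" for i
    proof -
      have r: "rs ! i \<in> car L (ks ! i)" using mem that by blast
      show ?thesis using f(1)[OF that] hsub[OF r] by blast
    qed
    have flen: "length (f i) = ks ! i" if "i < length ks" for i using ft[OF that] by (simp add: tuples_def)
    have mlb: "map length bs = ks"
      by (rule nth_equalityI) (simp_all add: bs_def flen)
    have lbs: "length bs = length ks" by (simp add: bs_def)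
    define xs where "xs = concat bs"
    have lxs: "length xs = ?N" by (simp add: xs_def length_concat mlb)
    have sxs: "set xs \<subseteq> W"
    proof
      fix x assume "x \<in> set xs"
      then obtain i where i: "i < length ks" "x \<in> set (f i)" by (auto simp: xs_def bs_def)
      then show "x \<in> W" using ft[OF i(1)] by (auto simp: tuples_def)
    qed
    have xsT: "xs \<in> tuples W ?N" using lxs sxs by (simp add: tuples_def)
    have st: "subst_tuple (ks ! i) (cyl ks i) xs = f i" if "i < length ks" for i
      using subst_tuple_block[of i bs] that mlb lbs flen[OF that] by (simp add: xs_def bs_def)
    have csub: "is_subst (ks ! i) ?N (cyl ks i)" if "i < length ks" for i using is_subst_cyl that by blast
    have setX: "set (map (\<lambda>i. sb L (ks ! i) ?N (cyl ks i) (rs ! i)) [0..<length ks]) \<subseteq> car L ?N"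
      using mem csub by auto
    have setY: "set (map (\<lambda>i. sb L (ks ! i) ?N (cyl ks i) (ss ! i)) [0..<length ks]) \<subseteq> car L ?N"
      using mem csub by auto
    have inE: "xs \<in> h ?N (sb L (ks ! i) ?N (cyl ks i) (rs ! i))" if "i < length ks" for i
    proof -
      have r: "rs ! i \<in> car L (ks ! i)" using mem that by blast
      have "h ?N (sb L (ks ! i) ?N (cyl ks i) (rs ! i)) = subst_rel W (ks ! i) ?N (cyl ks i) (h (ks ! i) (rs ! i))"
        using hs[OF csub[OF that] r] .
      then show ?thesis using xsT st[OF that] f(1)[OF that] by (simp add: subst_rel_def)
    qed
    have ninE: "xs \<notin> h ?N (sb L (ks ! i) ?N (cyl ks i) (ss ! i))" if "i < length ks" for i
    proof -
      have r: "ss ! i \<in> car L (ks ! i)" using mem that by blast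
      have "h ?N (sb L (ks ! i) ?N (cyl ks i) (ss ! i)) = subst_rel W (ks ! i) ?N (cyl ks i) (h (ks ! i) (ss ! i))"
        using hs[OF csub[OF that] r] .
      then show ?thesis using xsT st[OF that] f(2)[OF that] by (simp add: subst_rel_def)
    qed
    have inX: "xs \<in> h ?N X"
      unfolding X_def h_big_mt[OF setX] using xsT inE by auto
    have ninY: "xs \<notin> h ?N Y"
      unfolding Y_def h_big_jn[OF setY] using ninE by auto
    have XY: "X \<in> car L ?N" "Y \<in> car L ?N" unfolding X_def Y_def
      using bm_in[OF setX] bj_in[OF setY] by auto
    have e1: "X = mt L ?N X Y" using le by (simp add: le_in_def)
    have e2: "h ?N (mt L ?N X Y) = h ?N X \<inter> h ?N Y" using hm[OF XY] .
    have "h ?N X = h ?N X \<inter> h ?N Y" using e2 by (simp only: e1[symmetric])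
    then show False using inX ninY by blast
  qed
qed

end

theorem theorem4p1:
  fixes L :: "'a qf_alg"
  assumes "qf_multisorted_algebra L"
  shows "(qf_axioms L \<longrightarrow> (\<exists>W :: (nat \<times> 'a \<times> 'a \<times> nat) set. embeds_in_qf L W))
       \<and> (\<forall>W :: 'w set. embeds_in_qf L W \<longrightarrow> qf_axioms L)"
proof (intro conjI impI allI)
  assume ax: "qf_axioms L"
  interpret QA L using assms ax by unfold_locales (auto simp: qf_axioms_def)
  show "\<exists>W :: (nat \<times> 'a \<times> 'a \<times> nat) set. embeds_in_qf L W"
  proof (cases "one L 1 = zer L 1")
    case True
    then show ?thesis using deg_embedding unfolding embeds_in_qf_def by blast
  next
    case False
    interpret QAN L by unfold_locales (rule False)
    show ?thesis using emb_UNIV by blast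
  qed
next
  fix W :: "'w set" assume "embeds_in_qf L W"
  then obtain h where "qf_embedding L W h" unfolding embeds_in_qf_def by blast
  then interpret EMB L W h using assms by unfold_locales
  show "qf_axioms L" unfolding qf_axioms_def using ax0 ax1 ax2 ax3 ax4 ax5 ax6 by blast
qed


end
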